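(* Fix $T>0$ and $r>0$. For $a<0$, let $k^{\rm opt}_T(a)$ denote the minimizer of $J(k)=(1+rk^2)f_a(k)$ over $k\in(a,k_u(a))$. Then $$\lim_{a\to-\infty}\frac{1}{k^{\rm opt}_T(a)}\cdot\frac{e^{Ta}}{2r|a|}=1 .$$
   Context: For real $a$ with $aT<1$ and $T>0$, $k_u(a)$ is the unique solution $k>|a|$ of $T\sqrt{k^2-a^2}=\arccos(a/k)$; the interval $(a,k_u(a))$ is exactly the set of real gains $k$ for which $\dot x(t)=ax(t)-kx(t-T)$ is exponentially stable. For such $k$, define $$f_a(k)=\int_{-\infty}^{+\infty}\frac{d\omega}{\left|j\omega-a+ke^{-jT\omega}\right|^2},$$ which equals the squared $\mathcal H_2$-norm of the transfer function $1/(s-a+ke^{-Ts})$; explicitly, with $\ell=\sqrt{|k^2-a^2|}$, $f_a(k)=\frac{-k\sinh(\ell T)-\ell}{2\ell(a-k\cosh(\ell T))}$ if $|k|<-a$; $f_a(k)=\frac T4+\frac1{4|a|}$ if $k=|a|$, $a\neq0$; $f_a(k)=\frac{-k\sin(\ell T)-\ell}{2\ell(a-k\cos(\ell T))}$ if $|a|<k<k_u(a)$. The quantity $(1+rk^2)f_a(k)$ is the squared $\mathcal H_2$-norm from the disturbance $v$ to the output $z=(x,\sqrt r\,u)$ for $\dot x=ax+u+v$, $u(t)=-kx(t-T)$, with control weight $r>0$. *)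

theory Defs
  imports "HOL-Analysis.Analysis"
begin

definition k_u :: "real \<Rightarrow> real \<Rightarrow> real" where
  "k_u T a = (THE k. k > \<bar>a\<bar> \<and> T * sqrt (k\<^sup>2 - a\<^sup>2) = arccos (a / k))"

text \<open>Squared H2-norm of 1/(s - a + k e^{-Ts}), defined as the frequency-domain integral.\<close>
definition f_H2 :: "real \<Rightarrow> real \<Rightarrow> real \<Rightarrow> real" where
  "f_H2 T a k = integral UNIV (\<lambda>\<omega>::real.
      1 / (cmod (\<i> * complex_of_real \<omega> - complex_of_real a
                 + complex_of_real k * exp (- \<i> * complex_of_real (T * \<omega>))))\<^sup>2)"

definition J_cost :: "real \<Rightarrow> real \<Rightarrow> real \<Rightarrow> real \<Rightarrow> real" where
  "J_cost T r a k = (1 + r * k\<^sup>2) * f_H2 T a k"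

definition is_kopt :: "real \<Rightarrow> real \<Rightarrow> real \<Rightarrow> real \<Rightarrow> bool" where
  "is_kopt T r a k \<longleftrightarrow> a < k \<and> k < k_u T a \<and>
     (\<forall>k'. a < k' \<and> k' < k_u T a \<longrightarrow> J_cost T r a k \<le> J_cost T r a k')"

end

theory Submission
  imports Defs "HOL-Complex_Analysis.Complex_Analysis"
begin

lemma ball_sub_cbox_real:
  fixes a b B :: real
  assumes "B > 0" "ball 0 B \<subseteq> cbox a b"
  shows "a \<le> -B" "B \<le> b"
proof -
  have *: "\<And>x. -B < x \<Longrightarrow> x < B \<Longrightarrow> a \<le> x \<and> x \<le> b"
    using assms(2) by (auto simp: subset_iff dist_real_def abs_less_iff)
  show "a \<le> -B"
  proof (rule ccontr)
    assume "\<not> a \<le> -B"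
    then have "-B < (-B + min a 0)/2" "(-B + min a 0)/2 < B" using assms(1) by auto
    from *[OF this] show False using \<open>\<not> a \<le> -B\<close> by (auto simp: min_def split: if_splits)
  qed
  show "B \<le> b"
  proof (rule ccontr)
    assume "\<not> B \<le> b"
    then have "-B < (B + max b 0)/2" "(B + max b 0)/2 < B" using assms(1) by auto
    from *[OF this] show False using \<open>\<not> B \<le> b\<close> by (auto simp: max_def split: if_splits)
  qed
qed

lemma improper_FTC:
  fixes f F :: "real \<Rightarrow> 'a::banach"
  assumes der: "\<And>x. (F has_vector_derivative f x) (at x)"
    and La: "(F \<longlongrightarrow> La) at_bot" and Lb: "(F \<longlongrightarrow> Lb) at_top"
  shows "(f has_integral (Lb - La)) UNIV"
proof -
  have ftc: "(f has_integral (F b - F a)) {a..b}" if "a \<le> b" for a b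
    by (rule fundamental_theorem_of_calculus[OF that])
       (auto intro: has_vector_derivative_at_within der)
  show ?thesis
    unfolding has_integral_alt'[of f]
  proof (intro conjI allI impI)
    fix a b :: real
    show "(\<lambda>x. if x \<in> UNIV then f x else 0) integrable_on cbox a b"
    proof (cases "a \<le> b")
      case True then show ?thesis using ftc[OF True] by (auto simp: integrable_on_def)
    next
      case False then show ?thesis by (simp add: integrable_on_empty)
    qed
  next
    fix e :: real assume "e > 0"
    then have e2: "e/2 > 0" by simp
    from La e2 have "eventually (\<lambda>x. dist (F x) La < e/2) at_bot" by (rule tendstoD)
    then obtain B1 where B1: "\<And>x. x \<le> B1 \<Longrightarrow> dist (F x) La < e/2" by (auto simp: eventually_at_bot_linorder)
    from Lb e2 have "eventually (\<lambda>x. dist (F x) Lb < e/2) at_top" by (rule tendstoD)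
    then obtain B2 where B2: "\<And>x. x \<ge> B2 \<Longrightarrow> dist (F x) Lb < e/2" by (auto simp: eventually_at_top_linorder)
    define B where "B = max 1 (max (-B1) B2)"
    have "B > 0" by (simp add: B_def)
    moreover
    have "norm (integral (cbox a b) (\<lambda>x. if x \<in> UNIV then f x else 0) - (Lb - La)) < e"
      if "ball 0 B \<subseteq> cbox a b" for a b
    proof -
      have ab: "a \<le> -B" "B \<le> b" using ball_sub_cbox_real[OF \<open>B>0\<close> that] by auto
      then have "a \<le> B1" "b \<ge> B2" "a \<le> b" by (auto simp: B_def)
      have I: "integral (cbox a b) (\<lambda>x. if x \<in> UNIV then f x else 0) = F b - F a"
        using ftc[OF \<open>a \<le> b\<close>] by (simp add: integral_unique)
      have N: "norm (F b - Lb) < e/2" "norm (F a - La) < e/2"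
        using B1[OF \<open>a \<le> B1\<close>] B2[OF \<open>b \<ge> B2\<close>] by (auto simp: dist_norm)
      show ?thesis
      proof -
        have "F b - F a - (Lb - La) = (F b - Lb) - (F a - La)" by (simp add: algebra_simps)
        then have "norm (F b - F a - (Lb - La)) \<le> norm (F b - Lb) + norm (F a - La)"
          by (metis norm_triangle_ineq4)
        then show ?thesis using I N by simp
      qed
    qed
    ultimately show "\<exists>B>0. \<forall>a b. ball 0 B \<subseteq> cbox a b \<longrightarrow>
            norm (integral (cbox a b) (\<lambda>x. if x \<in> UNIV then f x else 0) - (Lb - La)) < e" by blast
  qed
qed

lemma inv_arctan_aux: "(b::real) \<noteq> 0 \<Longrightarrow> inverse (1 + (x / b)\<^sup>2) = b\<^sup>2 / (x\<^sup>2 + b\<^sup>2)"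
  by (simp add: field_simps power2_eq_square)

lemma tendsto_arctan_div_top:
  fixes b :: real assumes "b > 0"
  shows "((\<lambda>x. arctan (x/b)) \<longlongrightarrow> pi/2) at_top"
proof -
  have "filterlim (\<lambda>x. (1/b) * x) at_top at_top"
    using assms by (intro filterlim_tendsto_pos_mult_at_top[OF tendsto_const]) (auto intro: filterlim_ident)
  then show ?thesis using tendsto_arctan_at_top filterlim_compose by (simp add: field_simps) blast
qed

lemma tendsto_arctan_div_bot:
  fixes b :: real assumes "b > 0"
  shows "((\<lambda>x. arctan (x/b)) \<longlongrightarrow> -(pi/2)) at_bot"
proof -
  have "filterlim (\<lambda>x. (1/b) * x) at_bot at_bot"
    using assms by (intro filterlim_tendsto_pos_mult_at_bot[OF tendsto_const]) (auto intro: filterlim_ident)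
  then show ?thesis using tendsto_arctan_at_bot filterlim_compose by (simp add: field_simps) blast
qed

lemma integral_inv_sq:
  fixes b :: real assumes b: "b > 0"
  shows "((\<lambda>x. 1 / (x\<^sup>2 + b\<^sup>2)) has_integral (pi / b)) UNIV"
proof -
  have der: "((\<lambda>x. arctan (x/b) / b) has_vector_derivative 1 / (x\<^sup>2 + b\<^sup>2)) (at x)" for x
  proof -
    have "((\<lambda>x. arctan (x/b) / b) has_real_derivative 1 / (x\<^sup>2 + b\<^sup>2)) (at x)"
      using b apply (auto intro!: derivative_eq_intros simp: inv_arctan_aux)
      apply (simp add: power2_eq_square)
      done
    then show ?thesis by (simp add: has_real_derivative_iff_has_vector_derivative)
  qed
  have "((\<lambda>x. 1 / (x\<^sup>2 + b\<^sup>2)) has_integral (pi/2/b - (-(pi/2))/b)) UNIV"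
    by (rule improper_FTC[where La="(-(pi/2))/b" and Lb="pi/2/b", OF der])
       (intro tendsto_divide tendsto_const tendsto_arctan_div_top[OF b] tendsto_arctan_div_bot[OF b]; use b in simp)+
  then show ?thesis by simp
qed

lemma tendsto_x_over_sq_top:
  fixes b :: real assumes b: "b > 0"
  shows "((\<lambda>x. x / (x\<^sup>2 + b\<^sup>2)) \<longlongrightarrow> 0) at_top"
proof (rule tendsto_sandwich[of "\<lambda>_. 0" _ _ "\<lambda>x. inverse x"])
  show "eventually (\<lambda>x. 0 \<le> x / (x\<^sup>2 + b\<^sup>2)) at_top"
    using eventually_ge_at_top[of 0] by eventually_elim auto
  show "eventually (\<lambda>x. x / (x\<^sup>2 + b\<^sup>2) \<le> inverse x) at_top"
    using eventually_gt_at_top[of 0]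
  proof eventually_elim
    case (elim x)
    then have "x * x \<le> x\<^sup>2 + b\<^sup>2" by (simp add: power2_eq_square)
    then have "x * x / (x\<^sup>2 + b\<^sup>2) \<le> 1" using b by (subst divide_le_eq_1) (auto simp: add_nonneg_pos)
    then show ?case using elim b by (simp add: field_simps power2_eq_square)
  qed
qed (auto intro: tendsto_inverse_0_at_top filterlim_ident)

lemma tendsto_x_over_sq_bot:
  fixes b :: real assumes b: "b > 0"
  shows "((\<lambda>x. x / (x\<^sup>2 + b\<^sup>2)) \<longlongrightarrow> 0) at_bot"
proof -
  have "((\<lambda>x. - ((-x) / ((-x)\<^sup>2 + b\<^sup>2))) \<longlongrightarrow> -0) at_bot"
    using tendsto_x_over_sq_top[OF b] filterlim_uminus_at_top_at_bot
    by (intro tendsto_minus) (auto simp: at_bot_mirror filterlim_filtermap)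
  then show ?thesis by simp
qed

lemma integral_inv_sq2:
  fixes b :: real assumes b: "b > 0"
  shows "((\<lambda>x. 1 / (x\<^sup>2 + b\<^sup>2)\<^sup>2) has_integral (pi / (2 * b^3))) UNIV"
proof -
  define F where "F x = x / (x\<^sup>2 + b\<^sup>2) / (2*b\<^sup>2) + arctan (x/b) / (2*b^3)" for x
  have der: "(F has_vector_derivative 1 / (x\<^sup>2 + b\<^sup>2)\<^sup>2) (at x)" for x
  proof -
    have "(F has_real_derivative 1 / (x\<^sup>2 + b\<^sup>2)\<^sup>2) (at x)"
      unfolding F_def using b
      apply (auto intro!: derivative_eq_intros simp: inv_arctan_aux)
      apply (subgoal_tac "x\<^sup>2 + b\<^sup>2 > 0")
      apply (simp add: divide_simps power2_eq_square power3_eq_cube)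
      apply (simp add: eval_nat_numeral algebra_simps)
      apply (simp add: add_nonneg_pos)
      done
    then show ?thesis by (simp add: has_real_derivative_iff_has_vector_derivative)
  qed
  have "(1 / (x\<^sup>2 + b\<^sup>2)\<^sup>2) = 1 / (x\<^sup>2 + b\<^sup>2)\<^sup>2" for x by simp
  have "((\<lambda>x. 1 / (x\<^sup>2 + b\<^sup>2)\<^sup>2) has_integral
      ((0 / (2*b\<^sup>2) + (pi/2)/(2*b^3)) - (0/(2*b\<^sup>2) + (-(pi/2))/(2*b^3)))) UNIV"
    by (rule improper_FTC[where La="0/(2*b\<^sup>2) + (-(pi/2))/(2*b^3)" and Lb="0 / (2*b\<^sup>2) + (pi/2)/(2*b^3)", OF der]) (unfold F_def,
       (intro tendsto_add tendsto_divide tendsto_const tendsto_arctan_div_top tendsto_arctan_div_bot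
          tendsto_x_over_sq_top tendsto_x_over_sq_bot b; use b in simp)+)
  then show ?thesis by (simp add: field_simps)
qed

lemma arc_point_props:
  fixes R :: real assumes "R > 0" "z \<in> path_image (part_circlepath 0 R 0 pi)"
  shows "cmod z = R" "Im z \<ge> 0"
proof -
  obtain t where t: "0 \<le> t" "t \<le> pi" "z = R * exp (\<i> * of_real t)"
    using assms(2) by (auto simp: path_image_part_circlepath)
  show "cmod z = R" using t assms(1) by (simp add: norm_mult)
  have "Im z = R * sin t" using t by (simp add: Im_exp)
  then show "Im z \<ge> 0" using t assms(1) sin_ge_zero by simp
qed

lemma psi_real_aux:
  fixes x b :: real and u e :: complex assumes b: "b > 0"
  shows "(u - e) / (of_real x - \<i> * of_real b) / (\<i> * (of_real b - \<i> * of_real x)\<^sup>2)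
       = (u - e) * (of_real b + \<i> * of_real x) / of_real ((x\<^sup>2 + b\<^sup>2)\<^sup>2)"
proof -
  define p where "p = (of_real b + \<i> * of_real x :: complex)"
  define m where "m = (of_real b - \<i> * of_real x :: complex)"
  have p0: "p \<noteq> 0" using b by (simp add: p_def complex_eq_iff)
  have m0: "m \<noteq> 0" using b by (simp add: m_def complex_eq_iff)
  have e1: "(of_real x - \<i> * of_real b) * (\<i> * m\<^sup>2) = p * m\<^sup>2"
    by (simp add: p_def m_def algebra_simps)
  have e2: "(of_real ((x\<^sup>2 + b\<^sup>2)\<^sup>2) :: complex) = (p * m)\<^sup>2"
    by (simp add: p_def m_def algebra_simps power2_eq_square)
  have "(u - e) / (of_real x - \<i> * of_real b) / (\<i> * m\<^sup>2) = (u - e) / ((of_real x - \<i> * of_real b) * (\<i> * m\<^sup>2))"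
    by (simp add: divide_divide_eq_left)
  also have "\<dots> = (u - e) / (p * m\<^sup>2)" by (simp only: e1)
  also have "\<dots> = (u - e) * p / (p * m)\<^sup>2" using p0 m0 by (simp add: field_simps power2_eq_square)
  also have "\<dots> = (u - e) * p / of_real ((x\<^sup>2 + b\<^sup>2)\<^sup>2)" by (simp only: e2)
  finally show ?thesis by (simp only: p_def m_def)
qed
lemma contour_vanish:
  fixes b T :: real
  assumes b: "b > 0" and T: "T \<ge> 0"
  defines "E \<equiv> (\<lambda>w. exp (\<i> * of_real T * w))"
  defines "\<psi> \<equiv> (\<lambda>z. (if z = \<i> * of_real b then deriv E (\<i> * of_real b)
                     else (E z - E (\<i> * of_real b)) / (z - \<i> * of_real b))
                   / (\<i> * (of_real b - \<i> * z)\<^sup>2))"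
  shows "((\<lambda>x. \<psi> (of_real x)) has_integral 0) UNIV"
proof -
  define S where "S = {z. Im z > -b/2}"
  have openS: "open S" unfolding S_def by (simp add: open_halfspace_Im_gt)
  have convS: "convex S" unfolding S_def by (simp add: convex_halfspace_Im_gt)
  have holE: "E holomorphic_on S" unfolding E_def by (intro holomorphic_intros)
  have holg: "(\<lambda>z. if z = \<i> * of_real b then deriv E (\<i> * of_real b)
                     else (E z - E (\<i> * of_real b)) / (z - \<i> * of_real b)) holomorphic_on S"
    by (rule pole_lemma_open[OF holE openS])
  have nz: "\<i> * (of_real b - \<i> * z)\<^sup>2 \<noteq> 0" if "z \<in> S" for z
  proof
    assume "\<i> * (of_real b - \<i> * z)\<^sup>2 = 0"
    then have "of_real b - \<i> * z = 0" by simp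
    then have "Im (of_real b - \<i> * z) = 0" "Re (of_real b - \<i> * z) = 0" by simp_all
    then have "Im z = - b" by simp
    then show False using that b unfolding S_def by simp
  qed
  have hol: "\<psi> holomorphic_on S"
    unfolding \<psi>_def by (intro holomorphic_on_divide holg nz) (auto intro!: holomorphic_intros)
  have psi_real: "\<psi> (of_real x) = (E (of_real x) - E (\<i> * of_real b)) * (of_real b + \<i> * of_real x) / (of_real ((x\<^sup>2 + b\<^sup>2)\<^sup>2))" for x
  proof -
    have ne: "(of_real x :: complex) \<noteq> \<i> * of_real b" using b by (simp add: complex_eq_iff)
    show ?thesis unfolding \<psi>_def if_not_P[OF ne] by (rule psi_real_aux[OF b])
  qed
  have Eib: "E (\<i> * of_real b) = of_real (exp (-T*b))"
  proof -
    have "\<i> * of_real T * (\<i> * of_real b) = (\<i> * \<i>) * (of_real T * of_real b :: complex)"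
      by (simp only: mult_ac)
    also have "\<dots> = of_real (-T*b)" by simp
    finally have eq: "\<i> * of_real T * (\<i> * of_real b) = (of_real (-T*b) :: complex)" .
    show ?thesis unfolding E_def by (simp only: eq exp_of_real)
  qed
  have normE: "cmod (E z) \<le> 1" if "Im z \<ge> 0" for z
    unfolding E_def using that T by (simp add: norm_exp mult_nonneg_nonneg)
  have normEib: "cmod (E (\<i> * of_real b)) \<le> 1" using normE b by simp
  have bound_real: "cmod (\<psi> (of_real x)) \<le> 2 / b * (1 / (x\<^sup>2 + b\<^sup>2))" for x
  proof -
    have pos: "x\<^sup>2 + b\<^sup>2 > 0" using b by (simp add: add_nonneg_pos)
    have n1: "cmod (E (of_real x) - E (\<i> * of_real b)) \<le> 2"
      using normE[of "of_real x"] normEib norm_triangle_ineq4[of "E (of_real x)" "E (\<i> * of_real b)"] by simp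
    have n2: "cmod (of_real b + \<i> * of_real x) = sqrt (x\<^sup>2 + b\<^sup>2)"
      by (simp add: cmod_def add.commute)
    have n3: "sqrt (x\<^sup>2 + b\<^sup>2) \<le> (x\<^sup>2 + b\<^sup>2) / b"
    proof -
      have "b \<le> sqrt (x\<^sup>2 + b\<^sup>2)" using b by (simp add: real_le_rsqrt)
      then have "sqrt (x\<^sup>2 + b\<^sup>2) * b \<le> sqrt (x\<^sup>2 + b\<^sup>2) * sqrt (x\<^sup>2 + b\<^sup>2)"
        by (rule mult_left_mono) auto
      also have "\<dots> = x\<^sup>2 + b\<^sup>2" using pos by simp
      finally have h: "sqrt (x\<^sup>2 + b\<^sup>2) * b \<le> x\<^sup>2 + b\<^sup>2" .
      show ?thesis using h b by (simp add: pos_le_divide_eq)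
    qed
    have n4: "cmod (of_real b + \<i> * of_real x) \<le> (x\<^sup>2 + b\<^sup>2) / b" using n2 n3 by simp
    have n5: "cmod ((E (of_real x) - E (\<i> * of_real b)) * (of_real b + \<i> * of_real x)) \<le> 2 * ((x\<^sup>2 + b\<^sup>2) / b)"
      unfolding norm_mult by (rule mult_mono[OF n1 n4]) auto
    have n6: "cmod (\<psi> (of_real x)) = cmod ((E (of_real x) - E (\<i> * of_real b)) * (of_real b + \<i> * of_real x)) / (x\<^sup>2 + b\<^sup>2)\<^sup>2"
      unfolding psi_real norm_divide norm_of_real by simp
    have "cmod (\<psi> (of_real x)) \<le> 2 * ((x\<^sup>2 + b\<^sup>2) / b) / (x\<^sup>2 + b\<^sup>2)\<^sup>2"
      unfolding n6 using pos by (intro divide_right_mono n5) simp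
    also have "\<dots> = 2 / b * (1 / (x\<^sup>2 + b\<^sup>2))"
    proof -
      have gen: "\<And>A::real. A > 0 \<Longrightarrow> 2*(A/b)/A^2 = 2/b*(1/A)" using b by (simp add: field_simps power2_eq_square)
      show ?thesis using gen[OF pos] .
    qed
    finally show ?thesis .
  qed
  have cont_real: "continuous_on UNIV (\<lambda>x. \<psi> (of_real x))"
  proof -
    have "continuous_on S \<psi>" using hol by (rule holomorphic_on_imp_continuous_on)
    moreover have "range (of_real :: real \<Rightarrow> complex) \<subseteq> S" using b by (auto simp: S_def)
    ultimately show ?thesis
      by (intro continuous_on_compose2[of S \<psi> UNIV of_real]) (auto intro: continuous_intros)
  qed
  have int_g: "(\<lambda>x. 2 / b * (1 / (x\<^sup>2 + b\<^sup>2))) integrable_on UNIV"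
    using has_integral_mult_right[OF integral_inv_sq[OF b], of "2/b"] by (auto simp: integrable_on_def)
  have intpsi: "(\<lambda>x. \<psi> (of_real x)) integrable_on UNIV"
  proof (rule integrable_on_all_intervals_integrable_bound[OF _ _ int_g])
    fix a c :: real
    show "(\<lambda>x. if x \<in> UNIV then \<psi> (of_real x) else 0) integrable_on cbox a c"
      using continuous_on_subset[OF cont_real] by (auto intro!: integrable_continuous_interval)
  next
    fix x :: real assume "x \<in> UNIV"
    show "cmod (\<psi> (of_real x)) \<le> 2 / b * (1 / (x\<^sup>2 + b\<^sup>2))" by (rule bound_real)
  qed
  then obtain I where I: "((\<lambda>x. \<psi> (of_real x)) has_integral I) UNIV" by (auto simp: integrable_on_def)
  have line_small: "cmod (integral {-R..R} (\<lambda>x. \<psi> (of_real x))) \<le> 2 * pi * R / (R - b)^3"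
    if R: "R > 2 * b" for R
  proof -
    have R0: "R > 0" "R - b > 0" using R b by auto
    define g1 where "g1 = linepath (of_real (-R)) (of_real R :: complex)"
    define g2 where "g2 = part_circlepath 0 R 0 pi"
    have v1: "valid_path g1" "valid_path g2" unfolding g1_def g2_def by auto
    have pi1: "path_image g1 \<subseteq> S" unfolding g1_def S_def using b
      by (auto simp: closed_segment_def)
    have pi2: "path_image g2 \<subseteq> S"
    proof
      fix z assume "z \<in> path_image g2"
      then have "Im z \<ge> 0" using arc_point_props[OF R0(1)] unfolding g2_def by blast
      then show "z \<in> S" using b unfolding S_def by simp
    qed
    have "(\<psi> has_contour_integral 0) (g1 +++ g2)"
    proof (rule Cauchy_theorem_convex_simple[OF hol convS])
      show "valid_path (g1 +++ g2)" using v1 unfolding g1_def g2_def by (auto simp: valid_path_join)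
      show "path_image (g1 +++ g2) \<subseteq> S"
        using pi1 pi2 unfolding g1_def g2_def by (subst path_image_join) auto
      show "pathfinish (g1 +++ g2) = pathstart (g1 +++ g2)"
        unfolding g1_def g2_def by simp
    qed
    moreover obtain i1 where i1: "(\<psi> has_contour_integral i1) g1"
      using contour_integrable_holomorphic_simple[OF hol openS v1(1) pi1] by (auto simp: contour_integrable_on_def)
    moreover obtain i2 where i2: "(\<psi> has_contour_integral i2) g2"
      using contour_integrable_holomorphic_simple[OF hol openS v1(2) pi2] by (auto simp: contour_integrable_on_def)
    ultimately have "i1 + i2 = 0"
      using has_contour_integral_join[OF i1 i2 v1] has_contour_integral_unique by blast
    moreover have "i1 = integral {-R..R} (\<lambda>x. \<psi> (of_real x))"
    proof -
      have "i1 = contour_integral g1 \<psi>" using contour_integral_unique[OF i1] by simp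
      also have "\<dots> = integral {-R..R} (\<lambda>x. \<psi> (of_real x))"
        unfolding g1_def using R0 by (subst contour_integral_linepath_Reals_eq) auto
      finally show ?thesis .
    qed
    moreover have "cmod i2 \<le> 2 / (R - b)^3 * R * (pi - 0)"
    proof (rule has_contour_integral_bound_part_circlepath[OF i2[unfolded g2_def]])
      show "0 \<le> 2 / (R - b)^3" using R0 by simp
      show "0 < R" "0 \<le> pi" using R0 by auto
      fix z assume z: "z \<in> path_image (part_circlepath 0 R 0 pi)"
      have zR: "cmod z = R" and zI: "Im z \<ge> 0" using arc_point_props[OF R0(1) z] by auto
      have zne: "z \<noteq> \<i> * of_real b" using zR R b by (auto simp: norm_mult)
      have d1: "cmod (z - \<i> * of_real b) \<ge> R - b"
        using norm_triangle_ineq2[of z "\<i> * of_real b"] zR b by (simp add: norm_mult)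
      have "of_real b - \<i> * z = - \<i> * (z + \<i> * of_real b)" by (simp add: algebra_simps)
      then have "cmod (of_real b - \<i> * z) = cmod (z + \<i> * of_real b)" by (simp add: norm_mult)
      moreover have "cmod (z + \<i> * of_real b) \<ge> R - b"
        using norm_diff_ineq[of z "\<i> * of_real b"] zR b by (simp add: norm_mult)
      ultimately have d2: "cmod (\<i> * (of_real b - \<i> * z)\<^sup>2) \<ge> (R - b)\<^sup>2"
        using R0 by (simp add: norm_mult norm_power power_mono)
      have num: "cmod (E z - E (\<i> * of_real b)) \<le> 2"
        using normE[OF zI] normEib norm_triangle_ineq4[of "E z" "E (\<i> * of_real b)"] by simp
      have "cmod (\<psi> z) = cmod (E z - E (\<i> * of_real b)) / cmod (z - \<i> * of_real b) / cmod (\<i> * (of_real b - \<i> * z)\<^sup>2)"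
        unfolding \<psi>_def if_not_P[OF zne] norm_divide by (rule refl)
      also have "\<dots> \<le> 2 / (R - b) / (R - b)\<^sup>2"
        using num d1 d2 R0 by (intro divide_mono) (auto intro: mult_pos_pos)
      also have "\<dots> = 2 / (R - b)^3" by (simp add: power2_eq_square power3_eq_cube)
      finally show "cmod (\<psi> z) \<le> 2 / (R - b)^3" .
    qed
    ultimately have "cmod (integral {-R..R} (\<lambda>x. \<psi> (of_real x))) \<le> 2 / (R - b)^3 * R * (pi - 0)"
      by (metis add_eq_0_iff norm_minus_cancel)
    also have "\<dots> = 2 * pi * R / (R - b)^3" by simp
    finally show ?thesis .
  qed
  have "cmod I < e" if e: "e > 0" for e
  proof -
    have e2: "e/2 > 0" using e by simp
    from I[unfolded has_integral_alt'[of _ I]] e2 obtain B where B: "B > 0"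
      "\<And>a b. ball 0 B \<subseteq> cbox a b \<Longrightarrow> norm (integral (cbox a b) (\<lambda>x. if x \<in> UNIV then \<psi> (of_real x) else 0) - I) < e/2"
      by blast
    define R where "R = max (max (3*b) B) (32*pi/e + 1)"
    have R3: "R \<ge> 32*pi/e + 1" unfolding R_def by simp
    have "32*pi/e \<ge> 0" using e by simp
    then have R4: "R \<ge> 1" using R3 by linarith
    have R: "R > 2*b" "R \<ge> B" "R \<ge> 32*pi/e + 1" "R \<ge> 1" using b e R3 R4 unfolding R_def by auto
    have "ball 0 B \<subseteq> cbox (-R) R" using R by (auto simp: dist_real_def)
    then have n1: "norm (integral {-R..R} (\<lambda>x. \<psi> (of_real x)) - I) < e/2" using B(2)[of "-R" R] by simp
    have n2: "cmod (integral {-R..R} (\<lambda>x. \<psi> (of_real x))) \<le> 2 * pi * R / (R - b)^3"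
      using line_small R by blast
    have "R - b \<ge> R/2" using R by simp
    then have "(R/2)^3 \<le> (R - b)^3" using R by (intro power_mono) auto
    then have "2 * pi * R / (R - b)^3 \<le> 2 * pi * R / (R/2)^3"
      using R by (intro divide_left_mono) (auto intro: mult_pos_pos)
    also have "\<dots> = 16 * pi / R\<^sup>2" using R by (simp add: field_simps power2_eq_square power3_eq_cube)
    also have "\<dots> \<le> 16 * pi / R" using R by (intro divide_left_mono) (auto simp: power2_eq_square)
    also have "\<dots> < e/2"
    proof -
      have "32*pi/e < R" using R by simp
      then have "32*pi < R * e" using e by (simp add: field_simps)
      then show ?thesis using R by (simp add: field_simps)
    qed
    finally have "cmod (integral {-R..R} (\<lambda>x. \<psi> (of_real x))) < e/2" using n2 by linarith
    moreover have "I = integral {-R..R} (\<lambda>x. \<psi> (of_real x)) - (integral {-R..R} (\<lambda>x. \<psi> (of_real x)) - I)"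
      by simp
    then have "cmod I \<le> cmod (integral {-R..R} (\<lambda>x. \<psi> (of_real x))) + cmod (integral {-R..R} (\<lambda>x. \<psi> (of_real x)) - I)"
      by (metis norm_triangle_ineq4)
    ultimately show ?thesis using n1 by linarith
  qed
  then have "I = 0" by (metis norm_le_zero_iff not_less order_refl zero_less_norm_iff)
  then show ?thesis using I by simp
qed

lemma integral_C:
  fixes b T :: real
  assumes b: "b > 0" and T: "T \<ge> 0"
  shows "((\<lambda>x. (b * cos (T * x) - x * sin (T * x)) / (x\<^sup>2 + b\<^sup>2)\<^sup>2) has_integral
            (pi * exp (-T*b) / (2 * b\<^sup>2))) UNIV"
proof -
  define E where "E = (\<lambda>w. exp (\<i> * of_real T * w))"
  define \<psi> where "\<psi> = (\<lambda>z. (if z = \<i> * of_real b then deriv E (\<i> * of_real b)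
                     else (E z - E (\<i> * of_real b)) / (z - \<i> * of_real b))
                   / (\<i> * (of_real b - \<i> * z)\<^sup>2))"
  have I0: "((\<lambda>x. \<psi> (of_real x)) has_integral 0) UNIV"
    unfolding \<psi>_def E_def by (rule contour_vanish[OF b T])
  have Eib: "E (\<i> * of_real b) = of_real (exp (-T*b))"
  proof -
    have "\<i> * of_real T * (\<i> * of_real b) = (\<i> * \<i>) * (of_real T * of_real b :: complex)"
      by (simp only: mult_ac)
    also have "\<dots> = of_real (-T*b)" by simp
    finally have eq: "\<i> * of_real T * (\<i> * of_real b) = (of_real (-T*b) :: complex)" .
    show ?thesis unfolding E_def by (simp only: eq exp_of_real)
  qed
  have Re_psi: "Re (\<psi> (of_real x)) = (b * cos (T * x) - x * sin (T * x) - exp (-T*b) * b) / (x\<^sup>2 + b\<^sup>2)\<^sup>2" for x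
  proof -
    have ne: "(of_real x :: complex) \<noteq> \<i> * of_real b" using b by (simp add: complex_eq_iff)
    have "\<psi> (of_real x) = (E (of_real x) - E (\<i> * of_real b)) * (of_real b + \<i> * of_real x) / of_real ((x\<^sup>2 + b\<^sup>2)\<^sup>2)"
      unfolding \<psi>_def if_not_P[OF ne] by (rule psi_real_aux[OF b])
    also have "\<dots> = (E (of_real x) - of_real (exp (-T*b))) * (of_real b + \<i> * of_real x) / of_real ((x\<^sup>2 + b\<^sup>2)\<^sup>2)"
      by (simp only: Eib)
    finally have eq: "\<psi> (of_real x) = (E (of_real x) - of_real (exp (-T*b))) * (of_real b + \<i> * of_real x) / of_real ((x\<^sup>2 + b\<^sup>2)\<^sup>2)" .
    have ReE: "Re (E (of_real x)) = cos (T * x)" "Im (E (of_real x)) = sin (T * x)"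
      unfolding E_def by (simp_all add: Re_exp Im_exp)
    show ?thesis unfolding eq Re_divide_of_real using ReE by (simp add: algebra_simps)
  qed
  have I1: "((\<lambda>x. Re (\<psi> (of_real x))) has_integral 0) UNIV"
    using has_integral_Re[OF I0] by simp
  have I2: "((\<lambda>x. (exp (-T*b) * b) * (1 / (x\<^sup>2 + b\<^sup>2)\<^sup>2)) has_integral (exp (-T*b) * b) * (pi / (2 * b^3))) UNIV"
    by (rule has_integral_mult_right[OF integral_inv_sq2[OF b]])
  have I3: "((\<lambda>x. Re (\<psi> (of_real x)) + (exp (-T*b) * b) * (1 / (x\<^sup>2 + b\<^sup>2)\<^sup>2)) has_integral
            (0 + (exp (-T*b) * b) * (pi / (2 * b^3)))) UNIV"
    by (rule has_integral_add[OF I1 I2])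
  have fe: "(\<lambda>x. Re (\<psi> (of_real x)) + (exp (-T*b) * b) * (1 / (x\<^sup>2 + b\<^sup>2)\<^sup>2))
        = (\<lambda>x. (b * cos (T * x) - x * sin (T * x)) / (x\<^sup>2 + b\<^sup>2)\<^sup>2)"
    by (rule ext) (simp add: Re_psi diff_divide_distrib)
  have ve: "0 + (exp (-T*b) * b) * (pi / (2 * b^3)) = pi * exp (-T*b) / (2 * b\<^sup>2)"
    using b by (simp add: field_simps power2_eq_square power3_eq_cube)
  show ?thesis using I3 unfolding fe ve .
qed

definition Pk :: "real \<Rightarrow> real \<Rightarrow> real \<Rightarrow> real \<Rightarrow> real" where
  "Pk T a k w = (- a + k * cos (T * w))\<^sup>2 + (w - k * sin (T * w))\<^sup>2"

lemma Pk_nonneg: "Pk T a k w \<ge> 0"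
  unfolding Pk_def by simp

lemma cmod_D_sq:
  "(cmod (\<i> * complex_of_real w - complex_of_real a
          + complex_of_real k * exp (- \<i> * complex_of_real (T * w))))\<^sup>2 = Pk T a k w"
proof -
  define D where "D = \<i> * complex_of_real w - complex_of_real a
          + complex_of_real k * exp (- \<i> * complex_of_real (T * w))"
  have "Re D = - a + k * cos (T * w)" unfolding D_def by (simp add: Re_exp Im_exp)
  moreover have "Im D = w - k * sin (T * w)" unfolding D_def by (simp add: Re_exp Im_exp)
  ultimately show ?thesis unfolding D_def[symmetric] Pk_def by (simp add: cmod_power2)
qed

lemma f_H2_eq: "f_H2 T a k = integral UNIV (\<lambda>w. 1 / Pk T a k w)"
  unfolding f_H2_def cmod_D_sq ..

lemma alg_expand:
  fixes s c a k w :: real assumes "s\<^sup>2 + c\<^sup>2 = 1"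
  shows "(- a + k * c)\<^sup>2 + (w - k * s)\<^sup>2 = w\<^sup>2 + a\<^sup>2 + k\<^sup>2 + 2 * k * (- a * c - w * s)"
proof -
  have "(- a + k * c)\<^sup>2 + (w - k * s)\<^sup>2 = w\<^sup>2 + a\<^sup>2 + k\<^sup>2 * (s\<^sup>2 + c\<^sup>2) + 2 * k * (- a * c - w * s)"
    by (simp add: power2_eq_square algebra_simps)
  then show ?thesis using assms by simp
qed

lemma alg_C:
  fixes s c a w :: real assumes "s\<^sup>2 + c\<^sup>2 = 1"
  shows "(- a * c - w * s)\<^sup>2 \<le> w\<^sup>2 + a\<^sup>2"
proof -
  have "(w\<^sup>2 + a\<^sup>2) * (s\<^sup>2 + c\<^sup>2) - (- a * c - w * s)\<^sup>2 = (w * c - a * s)\<^sup>2"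
    by (simp add: power2_eq_square algebra_simps)
  then have "(w\<^sup>2 + a\<^sup>2) * (s\<^sup>2 + c\<^sup>2) - (- a * c - w * s)\<^sup>2 \<ge> 0" by simp
  then show ?thesis using assms by simp
qed

lemma Pk_expand:
  "Pk T a k w = w\<^sup>2 + a\<^sup>2 + k\<^sup>2 + 2 * k * (- a * cos (T * w) - w * sin (T * w))"
  unfolding Pk_def by (rule alg_expand) simp

lemma C_sq_le: fixes a w T :: real shows "(- a * cos (T * w) - w * sin (T * w))\<^sup>2 \<le> w\<^sup>2 + a\<^sup>2"
  using alg_C[of "sin (T * w)" "cos (T * w)" a w] by simp

lemma Pk_lower: "Pk T a k w \<ge> w\<^sup>2 / 2 + a\<^sup>2 / 2 - k\<^sup>2"
proof -
  define C where "C = - a * cos (T * w) - w * sin (T * w)"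
  have C2: "C\<^sup>2 \<le> w\<^sup>2 + a\<^sup>2" unfolding C_def by (rule C_sq_le)
  have "0 \<le> (2 * k + C)\<^sup>2" by simp
  then have "- 2 * k * C \<le> 2 * k\<^sup>2 + C\<^sup>2 / 2" by (simp add: power2_eq_square algebra_simps)
  then show ?thesis unfolding Pk_expand C_def[symmetric] using C2 by linarith
qed

lemma continuous_Pk2: "continuous_on S (\<lambda>p. Pk T a (fst p) (snd p))"
  unfolding Pk_def by (intro continuous_intros)

lemma continuous_Pk: "continuous_on S (\<lambda>w. Pk T a k w)"
  unfolding Pk_def by (intro continuous_intros)

lemma Pk_dom:
  assumes a: "a < 0" and k12: "k1 \<le> k2"
    and pos: "\<And>k w. k \<in> {k1..k2} \<Longrightarrow> Pk T a k w > 0"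
  shows "\<exists>c>0. \<forall>k\<in>{k1..k2}. \<forall>w. 1 / Pk T a k w \<le> c / (w\<^sup>2 + a\<^sup>2)"
proof -
  define W where "W = 2 * max \<bar>k1\<bar> \<bar>k2\<bar>"
  define K where "K = {k1..k2} \<times> {-W..W}"
  have cK: "compact K" "K \<noteq> {}" unfolding K_def W_def using k12 by (auto intro!: compact_Times)
  obtain p where p: "p \<in> K" "\<And>q. q \<in> K \<Longrightarrow> Pk T a (fst p) (snd p) \<le> Pk T a (fst q) (snd q)"
    using continuous_attains_inf[OF cK continuous_Pk2[of K T a]] by auto
  define m where "m = Pk T a (fst p) (snd p)"
  have m: "m > 0" unfolding m_def using pos p(1) unfolding K_def by (auto simp: mem_Times_iff)
  define c where "c = max 4 ((W\<^sup>2 + a\<^sup>2) / m)"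
  have c: "c > 0" unfolding c_def by simp
  have "1 / Pk T a k w \<le> c / (w\<^sup>2 + a\<^sup>2)" if k: "k \<in> {k1..k2}" for k w
  proof -
    have A: "w\<^sup>2 + a\<^sup>2 > 0" using a by (simp add: add_nonneg_pos)
    have kW: "\<bar>k\<bar> \<le> W / 2" using k unfolding W_def by auto
    show ?thesis
    proof (cases "\<bar>w\<bar> \<le> W")
      case True
      then have "(k, w) \<in> K" using k unfolding K_def by auto
      then have Pm: "Pk T a k w \<ge> m" using p(2)[of "(k,w)"] unfolding m_def by simp
      have "w\<^sup>2 \<le> W\<^sup>2" using True by (metis abs_le_square_iff abs_of_nonneg abs_ge_zero order_trans)
      then have "(w\<^sup>2 + a\<^sup>2) / m \<le> (W\<^sup>2 + a\<^sup>2) / m" using m by (intro divide_right_mono) auto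
      then have "(w\<^sup>2 + a\<^sup>2) / m \<le> c" unfolding c_def by linarith
      then have "(w\<^sup>2 + a\<^sup>2) \<le> c * m" using m by (simp add: field_simps)
      also have "\<dots> \<le> c * Pk T a k w" using Pm c by simp
      finally have "w\<^sup>2 + a\<^sup>2 \<le> c * Pk T a k w" .
      then show ?thesis using A m Pm by (simp add: field_simps)
    next
      case False
      then have "\<bar>w\<bar> \<ge> 2 * \<bar>k\<bar>" using kW by linarith
      then have "w\<^sup>2 \<ge> (2 * \<bar>k\<bar>)\<^sup>2" by (metis abs_ge_zero abs_le_square_iff abs_of_nonneg mult_nonneg_nonneg zero_le_numeral abs_mult abs_abs abs_numeral)
      then have "4 * k\<^sup>2 \<le> w\<^sup>2" by (simp add: power2_eq_square)
      moreover have "Pk T a k w \<ge> w\<^sup>2 / 2 + a\<^sup>2 / 2 - k\<^sup>2" by (rule Pk_lower)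
      moreover have "0 \<le> a\<^sup>2" by simp
      ultimately have P4: "4 * Pk T a k w \<ge> w\<^sup>2 + a\<^sup>2" by linarith
      have Ppos: "Pk T a k w > 0" using pos k by blast
      have "1 / Pk T a k w \<le> 4 / (w\<^sup>2 + a\<^sup>2)" using P4 Ppos A by (simp add: field_simps)
      also have "\<dots> \<le> c / (w\<^sup>2 + a\<^sup>2)" using A unfolding c_def by (intro divide_right_mono) auto
      finally show ?thesis .
    qed
  qed
  then show ?thesis using c by blast
qed

lemma int_inv_A:
  assumes "a < (0::real)" shows "((\<lambda>w. c / (w\<^sup>2 + a\<^sup>2)) has_integral c * (pi / (-a))) UNIV"
proof -
  have "((\<lambda>w. c * (1 / (w\<^sup>2 + (-a)\<^sup>2))) has_integral c * (pi / (-a))) UNIV"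
    using assms by (intro has_integral_mult_right integral_inv_sq) simp
  then show ?thesis by simp
qed

lemma integrable_invPk:
  assumes a: "a < 0" and pos: "\<And>w. Pk T a k w > 0"
  shows "(\<lambda>w. 1 / Pk T a k w) integrable_on UNIV"
proof -
  have "\<exists>c>0. \<forall>ka\<in>{k..k}. \<forall>w. 1 / Pk T a ka w \<le> c / (w\<^sup>2 + a\<^sup>2)"
    by (rule Pk_dom[OF a order_refl]) (use pos in auto)
  then obtain c where c: "c > 0" "\<And>w. 1 / Pk T a k w \<le> c / (w\<^sup>2 + a\<^sup>2)" by auto
  show ?thesis
  proof (rule integrable_on_all_intervals_integrable_bound)
    fix x y :: real
    show "(\<lambda>w. if w \<in> UNIV then 1 / Pk T a k w else 0) integrable_on cbox x y"
      using pos by (auto intro!: integrable_continuous_interval continuous_intros continuous_on_subset[OF continuous_Pk] simp: less_imp_neq[symmetric])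
  next
    fix w :: real assume "w \<in> UNIV"
    show "norm (1 / Pk T a k w) \<le> c / (w\<^sup>2 + a\<^sup>2)" using c(2)[of w] pos[of w] by simp
  next
    show "(\<lambda>w. c / (w\<^sup>2 + a\<^sup>2)) integrable_on UNIV" using int_inv_A[OF a] by (auto simp: integrable_on_def)
  qed
qed

lemma continuous_f:
  assumes a: "a < 0" and k12: "k1 \<le> k2"
    and pos: "\<And>k w. k \<in> {k1..k2} \<Longrightarrow> Pk T a k w > 0"
  shows "continuous_on {k1..k2} (\<lambda>k. integral UNIV (\<lambda>w. 1 / Pk T a k w))"
proof -
  obtain c where c: "c > 0" "\<And>k w. k \<in> {k1..k2} \<Longrightarrow> 1 / Pk T a k w \<le> c / (w\<^sup>2 + a\<^sup>2)"
    using Pk_dom[OF a k12 pos] by blast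
  have hint: "(\<lambda>w. c / (w\<^sup>2 + a\<^sup>2)) integrable_on UNIV" using int_inv_A[OF a] by (auto simp: integrable_on_def)
  show ?thesis unfolding continuous_on_sequentially
  proof (intro allI ballI impI, elim conjE)
    fix x :: "nat \<Rightarrow> real" and k
    assume k: "k \<in> {k1..k2}" and xs: "\<forall>n. x n \<in> {k1..k2}" and lim: "x \<longlonglongrightarrow> k"
    have "(\<lambda>n. integral UNIV (\<lambda>w. 1 / Pk T a (x n) w)) \<longlonglongrightarrow> integral UNIV (\<lambda>w. 1 / Pk T a k w)"
    proof (rule dominated_convergence(2)[OF _ hint])
      fix n show "(\<lambda>w. 1 / Pk T a (x n) w) integrable_on UNIV"
        using xs pos by (intro integrable_invPk[OF a]) auto
    next
      fix n w assume "w \<in> (UNIV::real set)"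
      show "norm (1 / Pk T a (x n) w) \<le> c / (w\<^sup>2 + a\<^sup>2)"
        using c(2)[of "x n" w] xs pos[of "x n" w] by auto
    next
      fix w assume "w \<in> (UNIV::real set)"
      have "(\<lambda>n. Pk T a (x n) w) \<longlonglongrightarrow> Pk T a k w"
        unfolding Pk_def by (intro tendsto_intros lim)
      then show "(\<lambda>n. 1 / Pk T a (x n) w) \<longlonglongrightarrow> 1 / Pk T a k w"
        using pos[OF k, of w] by (intro tendsto_intros) auto
    qed
    then show "((\<lambda>k. integral UNIV (\<lambda>w. 1 / Pk T a k w)) \<circ> x) \<longlonglongrightarrow> integral UNIV (\<lambda>w. 1 / Pk T a k w)"
      by (simp add: o_def)
  qed
qed

definition gku :: "real \<Rightarrow> real \<Rightarrow> real \<Rightarrow> real" where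
  "gku T a k = T * sqrt (k\<^sup>2 - a\<^sup>2) - arccos (a / k)"

lemma gku_mono:
  assumes T: "T > 0" and a: "a < 0" and k: "-a \<le> k" "k < k'"
  shows "gku T a k < gku T a k'"
proof -
  have k0: "k > 0" using a k by simp
  have "k\<^sup>2 < k'\<^sup>2" using k0 k by (intro power_strict_mono) auto
  then have "sqrt (k\<^sup>2 - a\<^sup>2) < sqrt (k'\<^sup>2 - a\<^sup>2)" by simp
  then have s: "T * sqrt (k\<^sup>2 - a\<^sup>2) < T * sqrt (k'\<^sup>2 - a\<^sup>2)" using T by simp
  have "a / k \<le> a / k'" using a k0 k by (intro divide_left_mono_neg) auto
  moreover have "-1 \<le> a / k" using a k0 k by (simp add: field_simps)
  moreover have "a / k' \<le> 1" using a k0 k by (simp add: field_simps)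
  ultimately have "arccos (a / k') \<le> arccos (a / k)" by (intro arccos_le_arccos) auto
  then show ?thesis using s unfolding gku_def by simp
qed

lemma gku_at_b:
  assumes a: "a < 0" shows "gku T a (-a) = - pi"
  using a unfolding gku_def by simp

lemma gku_cont:
  assumes a: "a < 0" and "k1 \<ge> -a"
  shows "continuous_on {k1..k2} (gku T a)"
proof -
  have "\<forall>x\<in>{k1..k2}. -1 \<le> a / x \<and> a / x \<le> 1" using assms by (auto simp: field_simps)
  then show ?thesis unfolding gku_def using assms
    by (intro continuous_intros continuous_on_arccos) auto
qed

lemma gku_big:
  assumes T: "T > 0" and a: "a < 0"
  shows "gku T a (-a + pi / T) > 0"
proof -
  define k where "k = -a + pi / T"
  have pT: "pi / T > 0" using T by simp
  have k0: "k > 0" unfolding k_def using a pT by simp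
  have "k\<^sup>2 - a\<^sup>2 = (pi/T) * (-2*a + pi/T)" unfolding k_def by (simp add: power2_eq_square algebra_simps)
  also have "\<dots> \<ge> (pi/T)\<^sup>2"
  proof -
    have "pi/T \<le> -2*a + pi/T" using a by simp
    then have "(pi/T)*(pi/T) \<le> (pi/T)*(-2*a + pi/T)" by (rule mult_left_mono) (use pT in auto)
    then show ?thesis by (simp add: power2_eq_square)
  qed
  finally have "sqrt (k\<^sup>2 - a\<^sup>2) \<ge> pi / T" using pT by (metis real_le_rsqrt less_imp_le)
  then have "T * sqrt (k\<^sup>2 - a\<^sup>2) \<ge> pi" using T by (simp add: field_simps)
  moreover have "arccos (a / k) < pi"
  proof -
    have "-1 < a / k" using a k0 pT unfolding k_def by (simp add: field_simps)
    moreover have "a / k \<le> 1" using a k0 by (simp add: field_simps)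
    ultimately have "arccos (a / k) < arccos (-1)" by (intro arccos_less_arccos) auto
    then show ?thesis by simp
  qed
  ultimately show ?thesis unfolding gku_def k_def by simp
qed

lemma ku_props:
  assumes T: "T > 0" and a: "a < 0"
  shows "k_u T a > -a" "gku T a (k_u T a) = 0" "k_u T a \<le> -a + pi / T"
    "\<And>k. -a \<le> k \<Longrightarrow> k < k_u T a \<Longrightarrow> gku T a k < 0"
proof -
  have ex: "\<exists>k. -a \<le> k \<and> k \<le> -a + pi/T \<and> gku T a k = 0"
    using gku_at_b[OF a, of T] gku_big[OF T a] T
    by (intro IVT'[OF _ _ _ gku_cont[OF a order_refl]]) auto
  then obtain k0 where k0: "-a \<le> k0" "k0 \<le> -a + pi/T" "gku T a k0 = 0" by blast
  have k0b: "k0 > -a" using k0 gku_at_b[OF a, of T] by (cases "k0 = -a") auto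
  have uniq: "k = k0" if "-a < k" "gku T a k = 0" for k
    using gku_mono[OF T a, of k k0] gku_mono[OF T a, of k0 k] that k0b k0
    by (cases k k0 rule: linorder_cases) auto
  have eqv: "(k > \<bar>a\<bar> \<and> T * sqrt (k\<^sup>2 - a\<^sup>2) = arccos (a / k)) \<longleftrightarrow> (k > -a \<and> gku T a k = 0)" for k
    using a unfolding gku_def by auto
  have ku: "k_u T a = k0"
    unfolding k_u_def eqv
  proof (rule the_equality)
    show "-a < k0 \<and> gku T a k0 = 0" using k0b k0 by simp
    show "\<And>k. -a < k \<and> gku T a k = 0 \<Longrightarrow> k = k0" using uniq by blast
  qed
  show "k_u T a > -a" "gku T a (k_u T a) = 0" "k_u T a \<le> -a + pi / T"
    using ku k0 k0b by auto
  show "gku T a k < 0" if "-a \<le> k" "k < k_u T a" for k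
    using gku_mono[OF T a that(1), of k0] that ku k0 by simp
qed

lemma Pk_zero_iff:
  "Pk T a k w = 0 \<longleftrightarrow> (- a + k * cos (T * w) = 0 \<and> w = k * sin (T * w))"
  unfolding Pk_def by (simp add: sum_power2_eq_zero_iff)

lemma Pk_pos:
  assumes T: "T > 0" and a: "a < 0" and k: "a < k" "k < k_u T a"
  shows "Pk T a k w > 0"
proof (rule ccontr)
  assume "\<not> Pk T a k w > 0"
  then have "Pk T a k w = 0" using Pk_nonneg[of T a k w] by simp
  then have c: "- a + k * cos (T * w) = 0" and s: "w = k * sin (T * w)" unfolding Pk_zero_iff by auto
  show False
  proof (cases "k \<le> -a")
    case True
    have "\<bar>k * cos (T * w)\<bar> \<le> \<bar>k\<bar>" by (simp add: abs_mult mult_left_le abs_cos_le_one)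
    then have "k = -a" "cos (T * w) = -1" using c True k a
      by (auto simp: abs_if split: if_splits) (metis (no_types, opaque_lifting) mult.commute mult_minus1 add.inverse_inverse
          mult_cancel_left nonzero_mult_div_cancel_left eq_divide_eq neg_0_less_iff_less less_irrefl)+
    then have "sin (T * w) = 0" using sin_cos_squared_add[of "T * w"] by simp
    then have "w = 0" using s by simp
    then show False using \<open>cos (T * w) = -1\<close> by simp
  next
    case False
    then have kb: "k > -a" by simp
    have k0: "k > 0" using kb a by simp
    have cosv: "cos (T * w) = a / k" using c k0 by (simp add: field_simps)
    define sv where "sv = sin (T * w)"
    define cv where "cv = cos (T * w)"
    have s': "w = k * sv" using s unfolding sv_def .
    have a': "a = k * cv" using c unfolding cv_def by simp
    have sc: "sv\<^sup>2 + cv\<^sup>2 = 1" unfolding sv_def cv_def by simp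
    have "w\<^sup>2 + a\<^sup>2 = k\<^sup>2 * (sv\<^sup>2 + cv\<^sup>2)"
      unfolding s' a' by (simp add: power2_eq_square algebra_simps)
    then have "w\<^sup>2 = k\<^sup>2 - a\<^sup>2" using sc by simp
    then have wabs: "\<bar>w\<bar> = sqrt (k\<^sup>2 - a\<^sup>2)" by (metis real_sqrt_abs)
    have neg: "gku T a k < 0" using ku_props(4)[OF T a] kb k by simp
    define \<theta> where "\<theta> = T * \<bar>w\<bar>"
    have th: "\<theta> < arccos (a / k)" using neg wabs unfolding gku_def \<theta>_def by simp
    have th0: "0 \<le> \<theta>" unfolding \<theta>_def using T by simp
    have r1: "-1 \<le> a / k" "a / k \<le> 1" using a k0 kb by (auto simp: field_simps)
    have thpi: "\<theta> \<le> pi" using th arccos_ubound[OF r1] by simp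
    have "cos \<theta> = cos (T * w)" unfolding \<theta>_def by (cases "w \<ge> 0") auto
    then have "arccos (a / k) = \<theta>" using cosv arccos_cos[OF th0 thpi] by simp
    then show False using th by simp
  qed
qed

lemma Pk_zero_ku:
  assumes T: "T > 0" and a: "a < 0"
  shows "Pk T a (k_u T a) (sqrt ((k_u T a)\<^sup>2 - a\<^sup>2)) = 0"
proof -
  define k where "k = k_u T a"
  have kb: "k > -a" and g: "gku T a k = 0" using ku_props[OF T a] unfolding k_def by auto
  have k0: "k > 0" using kb a by simp
  define w where "w = sqrt (k\<^sup>2 - a\<^sup>2)"
  have tw: "T * w = arccos (a / k)" using g unfolding gku_def w_def by simp
  have r1: "-1 \<le> a / k" "a / k \<le> 1" using a k0 kb by (auto simp: field_simps)
  have "cos (T * w) = a / k" unfolding tw using r1 by simp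
  then have c: "- a + k * cos (T * w) = 0" using k0 by simp
  have "sin (T * w) = sqrt (1 - (a / k)\<^sup>2)" unfolding tw using r1 by (rule sin_arccos)
  also have "\<dots> = sqrt ((k\<^sup>2 - a\<^sup>2) / k\<^sup>2)" using k0 by (simp add: field_simps power2_eq_square)
  also have "\<dots> = w / k" unfolding w_def using k0 by (simp add: real_sqrt_divide)
  finally have "w = k * sin (T * w)" using k0 by simp
  then show ?thesis using c unfolding Pk_zero_iff k_def[symmetric] w_def[symmetric] by simp
qed

lemma exp_i_diff:
  "cmod (exp (\<i> * of_real x) - exp (\<i> * of_real y)) \<le> \<bar>x - y\<bar>"
proof -
  define t where "t = x - y"
  have "exp (\<i> * of_real x) = exp (\<i> * of_real y) * exp (\<i> * of_real t)"
    unfolding t_def by (simp add: exp_add[symmetric] algebra_simps)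
  then have "exp (\<i> * of_real x) - exp (\<i> * of_real y) = exp (\<i> * of_real y) * (exp (\<i> * of_real t) - 1)"
    by (simp add: algebra_simps)
  then have eq: "cmod (exp (\<i> * of_real x) - exp (\<i> * of_real y)) = cmod (exp (\<i> * of_real t) - 1)"
    by (simp add: norm_mult)
  have "(cmod (exp (\<i> * of_real t) - 1))\<^sup>2 = (cos t - 1)\<^sup>2 + (sin t)\<^sup>2"
    by (simp add: cmod_power2 Re_exp Im_exp)
  also have "\<dots> = 2 - 2 * cos t"
    using sin_cos_squared_add[of t] by (simp add: power2_eq_square algebra_simps)
  also have "\<dots> = 4 * (sin (t/2))\<^sup>2"
    using cos_double_sin[of "t/2"] by simp
  also have "\<dots> \<le> 4 * (t/2)\<^sup>2"
  proof -
    have "\<bar>sin (t/2)\<bar> \<le> \<bar>t/2\<bar>" by (rule abs_sin_x_le_abs_x)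
    then have "\<bar>sin (t/2)\<bar>\<^sup>2 \<le> \<bar>t/2\<bar>\<^sup>2" by (intro power_mono) auto
    then have "(sin (t/2))\<^sup>2 \<le> (t/2)\<^sup>2" by (simp only: power2_abs)
    then show ?thesis by simp
  qed
  also have "\<dots> = \<bar>t\<bar>\<^sup>2" by (simp add: power2_eq_square)
  finally have "(cmod (exp (\<i> * of_real t) - 1))\<^sup>2 \<le> \<bar>t\<bar>\<^sup>2" .
  then have "cmod (exp (\<i> * of_real t) - 1) \<le> \<bar>t\<bar>" by (rule power2_le_imp_le) simp
  then show ?thesis unfolding eq t_def .
qed

definition Dc :: "real \<Rightarrow> real \<Rightarrow> real \<Rightarrow> real \<Rightarrow> complex" where
  "Dc T a k w = \<i> * complex_of_real w - complex_of_real a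
          + complex_of_real k * exp (- \<i> * complex_of_real (T * w))"

lemma sqrt_Pk: "sqrt (Pk T a k w) = cmod (Dc T a k w)"
  unfolding Dc_def cmod_D_sq[symmetric] by simp

lemma D_lip:
  assumes T: "T \<ge> 0"
  shows "cmod (Dc T a k w) \<le> cmod (Dc T a k' w') + \<bar>k - k'\<bar> + (1 + T * \<bar>k\<bar>) * \<bar>w - w'\<bar>"
proof -
  define E where "E = (\<lambda>w. exp (- \<i> * complex_of_real (T * w)))"
  have E: "cmod (E w - E w') \<le> T * \<bar>w - w'\<bar>"
  proof -
    have Ew: "E w = exp (\<i> * of_real (- (T * w)))" and Ew': "E w' = exp (\<i> * of_real (- (T * w')))"
      unfolding E_def by simp_all
    have "cmod (E w - E w') \<le> \<bar>- (T * w) - - (T * w')\<bar>" unfolding Ew Ew' by (rule exp_i_diff)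
    also have "\<dots> = \<bar>T * (w' - w)\<bar>" by (simp add: algebra_simps)
    also have "\<dots> = T * \<bar>w' - w\<bar>" using T by (simp add: abs_mult)
    also have "\<dots> = T * \<bar>w - w'\<bar>" by (metis abs_minus_commute)
    finally show ?thesis .
  qed
  have nE: "cmod (E w') = 1" unfolding E_def by simp
  define X where "X = \<i> * of_real (w - w')"
  define Y where "Y = of_real k * (E w - E w')"
  define Z where "Z = of_real (k - k') * E w'"
  have eq: "Dc T a k w = Dc T a k' w' + (X + Y + Z)"
    unfolding X_def Y_def Z_def Dc_def E_def by (simp add: algebra_simps)
  have t1: "cmod (Dc T a k w) \<le> cmod (Dc T a k' w') + cmod (X + Y + Z)"
    unfolding eq by (rule norm_triangle_ineq)
  have t2: "cmod (X + Y + Z) \<le> cmod (X + Y) + cmod Z" by (rule norm_triangle_ineq)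
  have t3: "cmod (X + Y) \<le> cmod X + cmod Y" by (rule norm_triangle_ineq)
  have nX: "cmod X = \<bar>w - w'\<bar>" unfolding X_def by (simp add: norm_mult of_real_diff[symmetric] del: of_real_diff)
  have nY: "cmod Y \<le> \<bar>k\<bar> * (T * \<bar>w - w'\<bar>)"
    unfolding Y_def norm_mult norm_of_real by (rule mult_left_mono[OF E]) simp
  have nZ: "cmod Z = \<bar>k - k'\<bar>" unfolding Z_def norm_mult nE norm_of_real by simp
  have dist: "(1 + T * \<bar>k\<bar>) * \<bar>w - w'\<bar> = \<bar>w - w'\<bar> + \<bar>k\<bar> * (T * \<bar>w - w'\<bar>)"
    by (simp add: algebra_simps)
  show ?thesis using t1 t2 t3 nX nY nZ dist by linarith
qed

lemma f_nonneg:
  "integral UNIV (\<lambda>w. 1 / Pk T a k w) \<ge> 0"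
proof (cases "(\<lambda>w. 1 / Pk T a k w) integrable_on UNIV")
  case True
  then show ?thesis using Pk_nonneg by (intro integral_nonneg) auto
next
  case False
  then show ?thesis by (simp add: not_integrable_integral)
qed

lemma blowup:
  assumes T: "T \<ge> 0" and a: "a < 0" and z: "Pk T a k' w' = 0" and kk: "k \<noteq> k'"
    and pos: "\<And>w. Pk T a k w > 0"
  shows "integral UNIV (\<lambda>w. 1 / Pk T a k w) \<ge> 2 / (\<bar>k - k'\<bar> * (2 + T * \<bar>k\<bar>)\<^sup>2)"
proof -
  define \<delta> where "\<delta> = \<bar>k - k'\<bar>"
  define M where "M = \<delta> * (2 + T * \<bar>k\<bar>)"
  have d0: "\<delta> > 0" using kk unfolding \<delta>_def by simp
  have M0: "M > 0" unfolding M_def using d0 T by (simp add: add_pos_nonneg)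
  have z': "cmod (Dc T a k' w') = 0" using z sqrt_Pk[of T a k' w'] by simp
  have le: "1 / M\<^sup>2 \<le> 1 / Pk T a k w" if w: "w \<in> {w' - \<delta>..w' + \<delta>}" for w
  proof -
    have "\<bar>w - w'\<bar> \<le> \<delta>" using w by auto
    then have "(1 + T * \<bar>k\<bar>) * \<bar>w - w'\<bar> \<le> (1 + T * \<bar>k\<bar>) * \<delta>" using T by (intro mult_left_mono) auto
    then have "cmod (Dc T a k w) \<le> M"
      using D_lip[OF T, of a k w k' w'] z' unfolding M_def \<delta>_def by (simp add: algebra_simps)
    then have "sqrt (Pk T a k w) \<le> M" using sqrt_Pk by metis
    then have "Pk T a k w \<le> M\<^sup>2" using M0 Pk_nonneg[of T a k w]
      by (metis real_sqrt_le_iff real_sqrt_pow2 power2_eq_square sqrt_le_D)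
    then show ?thesis using pos[of w] M0 by (intro divide_left_mono) (auto intro: mult_pos_pos)
  qed
  have intU: "(\<lambda>w. 1 / Pk T a k w) integrable_on UNIV" by (rule integrable_invPk[OF a pos])
  have intI: "(\<lambda>w. 1 / Pk T a k w) integrable_on {w' - \<delta>..w' + \<delta>}"
    by (rule integrable_on_subinterval[OF intU]) auto
  have c0: "2 + T * \<bar>k\<bar> > 0" using T by (simp add: add_pos_nonneg)
  have gen: "\<And>d c::real. d > 0 \<Longrightarrow> c > 0 \<Longrightarrow> 2 / (d * c\<^sup>2) = (2 * d) * (1 / (d * c)\<^sup>2)"
    by (simp add: field_simps power2_eq_square)
  have ie: "integral {w' - \<delta>..w' + \<delta>} (\<lambda>w. 1 / M\<^sup>2) = (2 * \<delta>) * (1 / M\<^sup>2)"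
    using d0 by simp
  have "2 / (\<delta> * (2 + T * \<bar>k\<bar>)\<^sup>2) = integral {w' - \<delta>..w' + \<delta>} (\<lambda>w. 1 / M\<^sup>2)"
    unfolding ie unfolding M_def by (rule gen[OF d0 c0])
  then have "2 / (\<bar>k - k'\<bar> * (2 + T * \<bar>k\<bar>)\<^sup>2) = integral {w' - \<delta>..w' + \<delta>} (\<lambda>w. 1 / M\<^sup>2)"
    by (simp only: \<delta>_def)
  also have "\<dots> \<le> integral {w' - \<delta>..w' + \<delta>} (\<lambda>w. 1 / Pk T a k w)"
    by (rule integral_le[OF _ intI le]) auto
  also have "\<dots> \<le> integral UNIV (\<lambda>w. 1 / Pk T a k w)"
    by (rule integral_subset_le[OF _ intI intU]) (use Pk_nonneg in auto)
  finally show ?thesis .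
qed

lemma Pk_zero_a: "Pk T a a 0 = 0"
  unfolding Pk_def by simp

lemma kopt_exists:
  assumes T: "T > 0" and r: "r > 0" and a: "a < 0"
  shows "\<exists>k. is_kopt T r a k"
proof -
  define ku where "ku = k_u T a"
  have ku: "ku > -a" using ku_props(1)[OF T a] unfolding ku_def .
  define F where "F = (\<lambda>k. integral UNIV (\<lambda>w. 1 / Pk T a k w))"
  define J where "J = (\<lambda>k. (1 + r * k\<^sup>2) * F k)"
  have Jeq: "J_cost T r a k = J k" for k unfolding J_cost_def J_def F_def f_H2_eq ..
  have F0: "F k \<ge> 0" for k unfolding F_def by (rule f_nonneg)
  have JF: "J k \<ge> F k" for k
  proof -
    have "1 * F k \<le> (1 + r * k\<^sup>2) * F k" using F0[of k] r by (intro mult_right_mono) auto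
    then show ?thesis unfolding J_def by simp
  qed
  have posI: "\<And>w. Pk T a k w > 0" if "a < k" "k < ku" for k
    using Pk_pos[OF T a] that unfolding ku_def by blast
  define V where "V = J 0"
  have V0: "V \<ge> 0" unfolding V_def J_def using F0 by simp
  define L where "L = 2 + T * ku"
  have L0: "L > 0" unfolding L_def using T ku a by (simp add: add_pos_nonneg)
  define \<delta> where "\<delta> = min (min (-a/2) (ku/2)) (1 / ((V + 1) * L\<^sup>2))"
  have d0: "\<delta> > 0" unfolding \<delta>_def using a ku V0 L0 by auto
  have dle: "\<delta> \<le> -a/2" "\<delta> \<le> ku/2" "\<delta> \<le> 1 / ((V + 1) * L\<^sup>2)" unfolding \<delta>_def by auto
  have big: "J k > V" if k: "a < k" "k < ku" and close: "\<bar>k - k'\<bar> \<le> \<delta>" "k \<noteq> k'"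
      and z: "Pk T a k' w' = 0" for k k' w'
  proof -
    have "\<bar>k\<bar> \<le> ku" using k ku by auto
    then have "2 + T * \<bar>k\<bar> \<le> L" unfolding L_def using T by (simp add: mult_left_mono)
    then have Lk: "(2 + T * \<bar>k\<bar>)\<^sup>2 \<le> L\<^sup>2" using T by (intro power_mono) (auto simp: add_nonneg_nonneg)
    have dk: "\<bar>k - k'\<bar> > 0" using close by simp
    have "\<bar>k - k'\<bar> * (2 + T * \<bar>k\<bar>)\<^sup>2 \<le> \<delta> * L\<^sup>2"
      using close(1) Lk dk by (intro mult_mono) auto
    also have "\<dots> \<le> 1 / ((V + 1) * L\<^sup>2) * L\<^sup>2" using dle(3) L0 by (intro mult_right_mono) auto
    also have "\<dots> = 1 / (V + 1)" using L0 by simp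
    finally have q: "\<bar>k - k'\<bar> * (2 + T * \<bar>k\<bar>)\<^sup>2 \<le> 1 / (V + 1)" .
    have c0: "2 + T * \<bar>k\<bar> > 0" using T by (simp add: add_pos_nonneg)
    have qpos: "\<bar>k - k'\<bar> * (2 + T * \<bar>k\<bar>)\<^sup>2 > 0" using dk c0 by simp
    have gen2: "\<And>x y::real. x > 0 \<Longrightarrow> y \<ge> 0 \<Longrightarrow> x \<le> 1 / (y + 1) \<Longrightarrow> 2 * y + 2 \<le> 2 / x"
      by (simp add: field_simps)
    have "2 * V + 2 \<le> 2 / (\<bar>k - k'\<bar> * (2 + T * \<bar>k\<bar>)\<^sup>2)"
      by (rule gen2[OF qpos V0 q])
    also have "\<dots> \<le> F k" unfolding F_def
      by (rule blowup[OF less_imp_le[OF T] a z close(2) posI[OF k]])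
    finally have "F k > V" using V0 by linarith
    then show ?thesis using JF[of k] by linarith
  qed
  define k1 where "k1 = a + \<delta>"
  define k2 where "k2 = ku - \<delta>"
  have k12: "a < k1" "k1 < 0" "0 < k2" "k2 < ku" "k1 \<le> k2"
    unfolding k1_def k2_def using d0 dle a ku by auto
  have contF: "continuous_on {k1..k2} F" unfolding F_def
    by (rule continuous_f[OF a k12(5)]) (use posI k12 in auto)
  have contJ: "continuous_on {k1..k2} J" unfolding J_def
    by (intro continuous_intros contF)
  obtain kst where kst: "kst \<in> {k1..k2}" "\<And>y. y \<in> {k1..k2} \<Longrightarrow> J kst \<le> J y"
    using continuous_attains_inf[OF compact_Icc _ contJ] k12 by auto
  have JV: "J kst \<le> V" unfolding V_def using kst(2)[of 0] k12 by auto
  have "is_kopt T r a kst"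
    unfolding is_kopt_def ku_def[symmetric] Jeq
  proof (intro conjI allI impI)
    show "a < kst" "kst < ku" using kst(1) k12 by auto
    fix k' assume k': "a < k' \<and> k' < ku"
    show "J kst \<le> J k'"
    proof (cases "k' \<in> {k1..k2}")
      case True then show ?thesis using kst(2) by blast
    next
      case False
      then have "k' < k1 \<or> k' > k2" by auto
      then show ?thesis
      proof
        assume "k' < k1"
        then have "\<bar>k' - a\<bar> \<le> \<delta>" "k' \<noteq> a" using k' unfolding k1_def by auto
        then have "J k' > V" using big[of k' a 0] k' Pk_zero_a[of T a] by auto
        then show ?thesis using JV by linarith
      next
        assume "k' > k2"
        then have "\<bar>k' - ku\<bar> \<le> \<delta>" "k' \<noteq> ku" using k' unfolding k2_def by auto
        then have "J k' > V" using big[of k' ku "sqrt (ku\<^sup>2 - a\<^sup>2)"] k' Pk_zero_ku[OF T a] unfolding ku_def by auto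
        then show ?thesis using JV by linarith
      qed
    qed
  qed
  then show ?thesis by blast
qed

lemma recip_lower:
  fixes A P :: real assumes A: "A > 0" and P: "P > 0"
  shows "1 / A - (P - A) / A\<^sup>2 \<le> 1 / P"
proof -
  have "0 \<le> (P - A)\<^sup>2 / (A\<^sup>2 * P)" using A P by simp
  also have "(P - A)\<^sup>2 / (A\<^sup>2 * P) = 1 / P - (1 / A - (P - A) / A\<^sup>2)"
    using A P by (simp add: field_simps power2_eq_square)
  finally show ?thesis by simp
qed

lemma recip_eq:
  fixes A P :: real assumes A: "A > 0" and P: "P > 0"
  shows "1 / P = 1 / A - (P - A) / A\<^sup>2 + (P - A)\<^sup>2 / (A\<^sup>2 * P)"
  using A P by (simp add: field_simps power2_eq_square)

lemma f_zero:
  assumes b: "b > 0"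
  shows "integral UNIV (\<lambda>w. 1 / Pk T (-b) 0 w) = pi / b"
proof -
  have "(\<lambda>w. 1 / Pk T (-b) 0 w) = (\<lambda>w. 1 / (w\<^sup>2 + b\<^sup>2))"
    unfolding Pk_def by (simp add: add.commute)
  then show ?thesis using integral_inv_sq[OF b] by (simp add: integral_unique)
qed

lemma has_integral_expansion:
  assumes b: "b > 0" and T: "T \<ge> 0"
  shows "((\<lambda>w. 1 / (w\<^sup>2 + b\<^sup>2) - (Pk T (-b) k w - (w\<^sup>2 + b\<^sup>2)) / (w\<^sup>2 + b\<^sup>2)\<^sup>2 + c * (1 / (w\<^sup>2 + b\<^sup>2)\<^sup>2))
     has_integral (pi / b - k\<^sup>2 * (pi / (2 * b^3)) - 2 * k * (pi * exp (-T*b) / (2 * b\<^sup>2)) + c * (pi / (2 * b^3)))) UNIV"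
proof -
  have PA: "Pk T (-b) k w - (w\<^sup>2 + b\<^sup>2) = k\<^sup>2 + 2 * k * (b * cos (T * w) - w * sin (T * w))" for w
    unfolding Pk_expand by simp
  have fe: "(\<lambda>w. 1 / (w\<^sup>2 + b\<^sup>2) - (Pk T (-b) k w - (w\<^sup>2 + b\<^sup>2)) / (w\<^sup>2 + b\<^sup>2)\<^sup>2 + c * (1 / (w\<^sup>2 + b\<^sup>2)\<^sup>2))
      = (\<lambda>w. 1 / (w\<^sup>2 + b\<^sup>2) - k\<^sup>2 * (1 / (w\<^sup>2 + b\<^sup>2)\<^sup>2) - (2 * k) * ((b * cos (T * w) - w * sin (T * w)) / (w\<^sup>2 + b\<^sup>2)\<^sup>2) + c * (1 / (w\<^sup>2 + b\<^sup>2)\<^sup>2))"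
    unfolding PA by (rule ext) (simp add: add_divide_distrib diff_divide_distrib algebra_simps)
  show ?thesis unfolding fe
    by (intro has_integral_add has_integral_diff has_integral_mult_right integral_inv_sq[OF b]
        integral_inv_sq2[OF b] integral_C[OF b T])
qed

lemma f_lower:
  assumes b: "b > 0" and T: "T \<ge> 0" and pos: "\<And>w. Pk T (-b) k w > 0"
  shows "integral UNIV (\<lambda>w. 1 / Pk T (-b) k w) \<ge> pi / b * (1 - k * (exp (-T*b) / b) - k\<^sup>2 / (2 * b\<^sup>2))"
proof -
  have a: "-b < 0" using b by simp
  have HI: "((\<lambda>w. 1 / (w\<^sup>2 + b\<^sup>2) - (Pk T (-b) k w - (w\<^sup>2 + b\<^sup>2)) / (w\<^sup>2 + b\<^sup>2)\<^sup>2 + 0 * (1 / (w\<^sup>2 + b\<^sup>2)\<^sup>2))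
     has_integral (pi / b - k\<^sup>2 * (pi / (2 * b^3)) - 2 * k * (pi * exp (-T*b) / (2 * b\<^sup>2)) + 0 * (pi / (2 * b^3)))) UNIV"
    by (rule has_integral_expansion[OF b T])
  have "pi / b - k\<^sup>2 * (pi / (2 * b^3)) - 2 * k * (pi * exp (-T*b) / (2 * b\<^sup>2)) + 0 * (pi / (2 * b^3))
      \<le> integral UNIV (\<lambda>w. 1 / Pk T (-b) k w)"
  proof (rule has_integral_le[OF HI])
    show "((\<lambda>w. 1 / Pk T (-b) k w) has_integral integral UNIV (\<lambda>w. 1 / Pk T (-b) k w)) UNIV"
      using integrable_invPk[OF a pos] by (simp add: integrable_integral)
    fix w :: real assume "w \<in> UNIV"
    have A: "w\<^sup>2 + b\<^sup>2 > 0" using b by (simp add: add_nonneg_pos)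
    show "1 / (w\<^sup>2 + b\<^sup>2) - (Pk T (-b) k w - (w\<^sup>2 + b\<^sup>2)) / (w\<^sup>2 + b\<^sup>2)\<^sup>2 + 0 * (1 / (w\<^sup>2 + b\<^sup>2)\<^sup>2) \<le> 1 / Pk T (-b) k w"
      using recip_lower[OF A pos[of w]] by simp
  qed
  moreover have "pi / b - k\<^sup>2 * (pi / (2 * b^3)) - 2 * k * (pi * exp (-T*b) / (2 * b\<^sup>2)) + 0 * (pi / (2 * b^3))
      = pi / b * (1 - k * (exp (-T*b) / b) - k\<^sup>2 / (2 * b\<^sup>2))"
    using b by (simp add: field_simps power2_eq_square power3_eq_cube)
  ultimately show ?thesis by simp
qed

lemma f_upper:
  assumes b: "b > 0" and T: "T \<ge> 0" and kb: "\<bar>k\<bar> \<le> b / 2"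
  shows "(\<forall>w. Pk T (-b) k w > 0) \<and>
    integral UNIV (\<lambda>w. 1 / Pk T (-b) k w) \<le> pi / b * (1 - k * (exp (-T*b) / b) + 17 * k\<^sup>2 / b\<^sup>2)"
proof -
  have a: "-b < 0" using b by simp
  have k2: "k\<^sup>2 \<le> b\<^sup>2 / 4"
  proof -
    have "\<bar>k\<bar>\<^sup>2 \<le> (b/2)\<^sup>2" using kb by (intro power_mono) auto
    then show ?thesis by (simp add: power2_eq_square)
  qed
  have Pge: "Pk T (-b) k w \<ge> (w\<^sup>2 + b\<^sup>2) / 4" for w
  proof -
    have h1: "Pk T (-b) k w \<ge> w\<^sup>2 / 2 + (-b)\<^sup>2 / 2 - k\<^sup>2" by (rule Pk_lower)
    have h2: "(-b)\<^sup>2 = b\<^sup>2" by simp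
    have h3: "w\<^sup>2 \<ge> 0" by simp
    have g: "w\<^sup>2 / 4 + b\<^sup>2 / 4 \<le> Pk T (-b) k w" using h1 h2 h3 k2 by linarith
    show ?thesis using g by (simp add: add_divide_distrib)
  qed
  have pos: "Pk T (-b) k w > 0" for w
  proof -
    have "(w\<^sup>2 + b\<^sup>2) / 4 > 0" using b by (simp add: add_nonneg_pos)
    then show ?thesis using Pge[of w] by linarith
  qed
  have HI: "((\<lambda>w. 1 / (w\<^sup>2 + b\<^sup>2) - (Pk T (-b) k w - (w\<^sup>2 + b\<^sup>2)) / (w\<^sup>2 + b\<^sup>2)\<^sup>2 + (34 * k\<^sup>2) * (1 / (w\<^sup>2 + b\<^sup>2)\<^sup>2))
     has_integral (pi / b - k\<^sup>2 * (pi / (2 * b^3)) - 2 * k * (pi * exp (-T*b) / (2 * b\<^sup>2)) + (34 * k\<^sup>2) * (pi / (2 * b^3)))) UNIV"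
    by (rule has_integral_expansion[OF b T])
  have "integral UNIV (\<lambda>w. 1 / Pk T (-b) k w) \<le> pi / b - k\<^sup>2 * (pi / (2 * b^3)) - 2 * k * (pi * exp (-T*b) / (2 * b\<^sup>2)) + (34 * k\<^sup>2) * (pi / (2 * b^3))"
  proof (rule has_integral_le[OF _ HI])
    show "((\<lambda>w. 1 / Pk T (-b) k w) has_integral integral UNIV (\<lambda>w. 1 / Pk T (-b) k w)) UNIV"
      using integrable_invPk[OF a pos] by (simp add: integrable_integral)
    fix w :: real assume "w \<in> UNIV"
    define A where "A = w\<^sup>2 + b\<^sup>2"
    define P where "P = Pk T (-b) k w"
    define C where "C = b * cos (T * w) - w * sin (T * w)"
    have A0: "A > 0" unfolding A_def using b by (simp add: add_nonneg_pos)
    have P0: "P > 0" unfolding P_def by (rule pos)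
    have PA: "P - A = k\<^sup>2 + 2 * k * C" unfolding P_def A_def C_def Pk_expand by simp
    have C2: "C\<^sup>2 \<le> A" unfolding C_def A_def using C_sq_le[of "-b" T w] by simp
    have PgeA: "P \<ge> A / 4" unfolding P_def A_def by (rule Pge)
    have A4: "A / 4 = w\<^sup>2 / 4 + b\<^sup>2 / 4" unfolding A_def by simp
    have kA: "k\<^sup>2 \<le> A / 4" using k2 A4 zero_le_power2[of w] by linarith
    have sq: "(P - A)\<^sup>2 \<le> k\<^sup>2 * (2 * k\<^sup>2 + 8 * C\<^sup>2)"
    proof -
      have "(P - A)\<^sup>2 = k\<^sup>2 * (k + 2 * C)\<^sup>2" unfolding PA by (simp add: power2_eq_square algebra_simps)
      moreover have "(k + 2 * C)\<^sup>2 \<le> 2 * k\<^sup>2 + 8 * C\<^sup>2"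
      proof -
        have "0 \<le> (k - 2 * C)\<^sup>2" by simp
        then show ?thesis by (simp add: power2_eq_square algebra_simps)
      qed
      ultimately show ?thesis by (simp add: mult_left_mono)
    qed
    also have "\<dots> \<le> k\<^sup>2 * (17 / 2 * A)" using kA C2 by (intro mult_left_mono) auto
    finally have sq': "(P - A)\<^sup>2 \<le> k\<^sup>2 * (17 / 2 * A)" .
    have "(P - A)\<^sup>2 / (A\<^sup>2 * P) \<le> k\<^sup>2 * (17 / 2 * A) / (A\<^sup>2 * (A / 4))"
      using sq' PgeA A0 P0 by (intro frac_le) (auto intro: mult_left_mono)
    also have "\<dots> = (34 * k\<^sup>2) * (1 / A\<^sup>2)" using A0 by (simp add: field_simps power2_eq_square)
    finally have rem: "(P - A)\<^sup>2 / (A\<^sup>2 * P) \<le> (34 * k\<^sup>2) * (1 / A\<^sup>2)" .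
    show "1 / P \<le> 1 / A - (P - A) / A\<^sup>2 + (34 * k\<^sup>2) * (1 / A\<^sup>2)"
      using recip_eq[OF A0 P0] rem by linarith
  qed
  moreover have "pi / b - k\<^sup>2 * (pi / (2 * b^3)) - 2 * k * (pi * exp (-T*b) / (2 * b\<^sup>2)) + (34 * k\<^sup>2) * (pi / (2 * b^3))
      \<le> pi / b * (1 - k * (exp (-T*b) / b) + 17 * k\<^sup>2 / b\<^sup>2)"
  proof -
    have "pi / b - k\<^sup>2 * (pi / (2 * b^3)) - 2 * k * (pi * exp (-T*b) / (2 * b\<^sup>2)) + (34 * k\<^sup>2) * (pi / (2 * b^3))
       = pi / b * (1 - k * (exp (-T*b) / b) + 33 / 2 * k\<^sup>2 / b\<^sup>2)"
      using b by (simp add: field_simps power2_eq_square power3_eq_cube)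
    also have "\<dots> \<le> pi / b * (1 - k * (exp (-T*b) / b) + 17 * k\<^sup>2 / b\<^sup>2)"
    proof -
      have "33 / 2 * k\<^sup>2 \<le> 17 * k\<^sup>2" by simp
      then have "33 / 2 * k\<^sup>2 / b\<^sup>2 \<le> 17 * k\<^sup>2 / b\<^sup>2" by (intro divide_right_mono) auto
      then show ?thesis using b by (intro mult_left_mono) auto
    qed
    finally show ?thesis .
  qed
  ultimately show ?thesis using pos by auto
qed

lemma asym_stage1:
  fixes r b e k :: real
  assumes r: "r > 0" and b: "b > 0" and e: "e > 0"
    and kb: "k\<^sup>2 \<le> 3 / 2 * b\<^sup>2" and rb: "r * b\<^sup>2 \<ge> 4"
    and L0: "(1 + r * k\<^sup>2) * (1 - k * e - k\<^sup>2 / (2 * b\<^sup>2)) \<le> 1"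
  shows "\<bar>k\<bar> \<le> 8 * (1 + 3 / 2 * r * b\<^sup>2) * e / r"
proof -
  define y where "y = k\<^sup>2"
  define u where "u = 1 / (2 * b\<^sup>2)"
  have y0: "y \<ge> 0" unfolding y_def by simp
  have u0: "u > 0" unfolding u_def using b by simp
  have yu: "y * u \<le> 3 / 4" unfolding y_def u_def using kb b by (simp add: field_simps)
  have ur: "u \<le> r / 8" unfolding u_def using rb b by (simp add: field_simps)
  have L0': "(1 + r * y) * (1 - y * u) - (1 + r * y) * (k * e) \<le> 1"
    using L0 unfolding y_def u_def by (simp add: algebra_simps)
  have "r * y * (y * u) \<le> r * y * (3 / 4)" using yu r y0 by (intro mult_left_mono) auto
  then have "(1 + r * y) * (1 - y * u) \<ge> 1 + r * y / 4 - y * u" by (simp add: algebra_simps)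
  moreover have "y * u \<le> y * (r / 8)" using ur y0 by (intro mult_left_mono) auto
  moreover have "y * (r / 8) = r * y / 8" by simp
  ultimately have "1 + r * y / 8 \<le> (1 + r * y) * (1 - y * u)" by linarith
  then have A: "r * y / 8 \<le> (1 + r * y) * (k * e)" using L0' by linarith
  have "(1 + r * y) * (k * e) \<le> (1 + r * y) * (\<bar>k\<bar> * e)"
    using r y0 e by (intro mult_left_mono) (auto simp: add_nonneg_nonneg)
  also have "\<dots> \<le> (1 + 3 / 2 * r * b\<^sup>2) * (\<bar>k\<bar> * e)"
  proof -
    have "r * y \<le> r * (3 / 2 * b\<^sup>2)" using kb r unfolding y_def by (intro mult_left_mono) auto
    then show ?thesis using e by (intro mult_right_mono) auto
  qed
  finally have B: "r * k\<^sup>2 / 8 \<le> (1 + 3 / 2 * r * b\<^sup>2) * (\<bar>k\<bar> * e)" using A unfolding y_def by linarith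
  show ?thesis
  proof (cases "k = 0")
    case True then show ?thesis using r e b by (simp add: add_pos_nonneg)
  next
    case False
    then have k0: "\<bar>k\<bar> > 0" by simp
    have kk: "k\<^sup>2 = \<bar>k\<bar> * \<bar>k\<bar>" by (simp add: power2_eq_square)
    have e1: "(r * \<bar>k\<bar> / 8) * \<bar>k\<bar> = r * k\<^sup>2 / 8" unfolding kk by simp
    have e2: "((1 + 3 / 2 * r * b\<^sup>2) * e) * \<bar>k\<bar> = (1 + 3 / 2 * r * b\<^sup>2) * (\<bar>k\<bar> * e)" by simp
    have "(r * \<bar>k\<bar> / 8) * \<bar>k\<bar> \<le> ((1 + 3 / 2 * r * b\<^sup>2) * e) * \<bar>k\<bar>"
      unfolding e1 e2 by (rule B)
    then have "r * \<bar>k\<bar> / 8 \<le> (1 + 3 / 2 * r * b\<^sup>2) * e" using k0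
      by (rule mult_right_le_imp_le)
    then show ?thesis using r by (simp add: field_simps)
  qed
qed

lemma asym_core:
  fixes r b e k k0 K1 :: real
  assumes r: "r > 0" and b: "b > 0" and e: "e > 0"
    and k0def: "k0 = e / (2 * r)"
    and K1: "\<bar>k\<bar> \<le> K1"
    and L1: "(1 + r * k\<^sup>2) * (1 - k * e - k\<^sup>2 / (2 * b\<^sup>2)) \<le> (1 + r * k0\<^sup>2) * (1 - k0 * e + 17 * k0\<^sup>2 / b\<^sup>2)"
    and eta_small: "1 / (2 * b\<^sup>2) + r * K1 * e + r * K1\<^sup>2 / (2 * b\<^sup>2) \<le> r / 4"
  shows "(k / k0 - 1)\<^sup>2 \<le> 2 * (2 * (1 / (2 * b\<^sup>2) + r * K1 * e + r * K1\<^sup>2 / (2 * b\<^sup>2))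
                               + (17 / b\<^sup>2 + 17 * r * k0\<^sup>2 / b\<^sup>2)) / r"
proof -
  define u where "u = 1 / (2 * b\<^sup>2)"
  define \<eta> where "\<eta> = 1 / (2 * b\<^sup>2) + r * K1 * e + r * K1\<^sup>2 / (2 * b\<^sup>2)"
  define \<mu> where "\<mu> = 17 / b\<^sup>2 + 17 * r * k0\<^sup>2 / b\<^sup>2"
  have u0: "u > 0" unfolding u_def using b by simp
  have kk0: "k0 > 0" unfolding k0def using e r by simp
  have ee: "e = 2 * r * k0" unfolding k0def using r by simp
  have K10: "K1 \<ge> 0" using K1 by linarith
  have \<eta>u: "\<eta> = u + r * K1 * e + r * K1\<^sup>2 * u" unfolding \<eta>_def u_def by simp
  have \<mu>u: "\<mu> = 34 * u * k0\<^sup>2 * 0 + 34 * u + 34 * r * k0\<^sup>2 * u" unfolding \<mu>_def u_def by (simp add: field_simps)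
  have eq1: "(1 + r * k\<^sup>2) * (1 - k * e - k\<^sup>2 / (2 * b\<^sup>2))
      = 1 + r * (k - k0)\<^sup>2 - r * k0\<^sup>2 - k\<^sup>2 * u - r * k^3 * e - r * k^4 * u"
    unfolding ee u_def by (simp add: power2_eq_square power3_eq_cube algebra_simps eval_nat_numeral add_divide_distrib diff_divide_distrib)
  have eq2: "(1 + r * k0\<^sup>2) * (1 - k0 * e + 17 * k0\<^sup>2 / b\<^sup>2)
      = 1 - r * k0\<^sup>2 + 34 * k0\<^sup>2 * u - r * k0^3 * e + 34 * r * k0^4 * u"
    unfolding ee u_def by (simp add: power2_eq_square power3_eq_cube algebra_simps eval_nat_numeral add_divide_distrib diff_divide_distrib)
  have neg: "r * k0^3 * e \<ge> 0" using r kk0 e by simp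
  have S2: "r * (k - k0)\<^sup>2 \<le> k\<^sup>2 * u + r * k^3 * e + r * k^4 * u + 34 * k0\<^sup>2 * u + 34 * r * k0^4 * u"
    using L1 neg unfolding eq1 eq2 by linarith
  have t1: "r * k^3 * e \<le> k\<^sup>2 * (r * K1 * e)"
  proof -
    have "r * k^3 * e = k\<^sup>2 * (r * k * e)" by (simp add: power2_eq_square power3_eq_cube)
    also have "\<dots> \<le> k\<^sup>2 * (r * K1 * e)"
    proof (rule mult_left_mono)
      have "k \<le> K1" using K1 by linarith
      then show "r * k * e \<le> r * K1 * e" using r e by (intro mult_right_mono mult_left_mono) auto
    qed simp
    finally show ?thesis .
  qed
  have t2: "r * k^4 * u \<le> k\<^sup>2 * (r * K1\<^sup>2 * u)"
  proof -
    have "k\<^sup>2 \<le> K1\<^sup>2" using K1 by (metis abs_le_square_iff abs_of_nonneg K10)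
    then have "r * k\<^sup>2 * u \<le> r * K1\<^sup>2 * u" using r u0 by (intro mult_right_mono mult_left_mono) auto
    then have "k\<^sup>2 * (r * k\<^sup>2 * u) \<le> k\<^sup>2 * (r * K1\<^sup>2 * u)" by (intro mult_left_mono) auto
    moreover have "r * k^4 * u = k\<^sup>2 * (r * k\<^sup>2 * u)" by (simp add: power2_eq_square eval_nat_numeral)
    ultimately show ?thesis by metis
  qed
  have S3: "r * (k - k0)\<^sup>2 \<le> k\<^sup>2 * \<eta> + k0\<^sup>2 * \<mu>"
  proof -
    have "k\<^sup>2 * \<eta> + k0\<^sup>2 * \<mu> = k\<^sup>2 * u + k\<^sup>2 * (r * K1 * e) + k\<^sup>2 * (r * K1\<^sup>2 * u) + 34 * k0\<^sup>2 * u + 34 * r * k0^4 * u"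
      unfolding \<eta>u \<mu>u by (simp add: algebra_simps power2_eq_square eval_nat_numeral)
    then show ?thesis using S2 t1 t2 by linarith
  qed
  define q where "q = k / k0"
  have kq: "k = q * k0" unfolding q_def using kk0 by simp
  have S4: "r * (q - 1)\<^sup>2 \<le> q\<^sup>2 * \<eta> + \<mu>"
  proof -
    have "k0\<^sup>2 * (r * (q - 1)\<^sup>2) \<le> k0\<^sup>2 * (q\<^sup>2 * \<eta> + \<mu>)"
      using S3 unfolding kq by (simp add: power2_eq_square algebra_simps)
    then show ?thesis using kk0 by (simp add: mult_le_cancel_left)
  qed
  have \<eta>0: "\<eta> \<ge> 0" unfolding \<eta>_def using r e b K10 by (simp add: add_nonneg_nonneg)
  have q2: "q\<^sup>2 \<le> 2 * (q - 1)\<^sup>2 + 2"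
  proof -
    have "0 \<le> (q - 2)\<^sup>2" by simp
    then show ?thesis by (simp add: power2_eq_square algebra_simps)
  qed
  have "q\<^sup>2 * \<eta> \<le> (2 * (q - 1)\<^sup>2 + 2) * \<eta>" using q2 \<eta>0 by (rule mult_right_mono)
  then have "r * (q - 1)\<^sup>2 \<le> (2 * (q - 1)\<^sup>2 + 2) * \<eta> + \<mu>" using S4 by linarith
  then have "(r - 2 * \<eta>) * (q - 1)\<^sup>2 \<le> 2 * \<eta> + \<mu>" by (simp add: algebra_simps)
  moreover have "(r / 2) * (q - 1)\<^sup>2 \<le> (r - 2 * \<eta>) * (q - 1)\<^sup>2"
    using eta_small unfolding \<eta>_def[symmetric] by (intro mult_right_mono) auto
  ultimately have "(r / 2) * (q - 1)\<^sup>2 \<le> 2 * \<eta> + \<mu>" by linarith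
  then have "(q - 1)\<^sup>2 \<le> 2 * (2 * \<eta> + \<mu>) / r" using r by (simp add: field_simps)
  then show ?thesis unfolding q_def \<eta>_def \<mu>_def .
qed

lemma lim_exp_neg:
  fixes T :: real assumes T: "T > 0"
  shows "((\<lambda>b. exp (-T * b)) \<longlongrightarrow> 0) at_top"
proof -
  have "filterlim (\<lambda>b. T * b) at_top at_top"
    using T by (intro filterlim_tendsto_pos_mult_at_top[OF tendsto_const]) (auto intro: filterlim_ident)
  then have "filterlim (\<lambda>b. - (T * b)) at_bot at_top"
    by (simp add: filterlim_uminus_at_top)
  then have "((\<lambda>b. exp (- (T * b))) \<longlongrightarrow> 0) at_top"
    using exp_at_bot filterlim_compose by blast
  then show ?thesis by simp
qed

lemma lim_b_exp_neg:
  fixes T :: real assumes T: "T > 0"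
  shows "((\<lambda>b. b * exp (-T * b)) \<longlongrightarrow> 0) at_top"
proof -
  have f: "filterlim (\<lambda>b. T * b) at_top at_top"
    using T by (intro filterlim_tendsto_pos_mult_at_top[OF tendsto_const]) (auto intro: filterlim_ident)
  have "((\<lambda>x. x ^ 1 / exp x) \<longlongrightarrow> (0::real)) at_top" by (rule tendsto_power_div_exp_0)
  then have "((\<lambda>b. (T * b) ^ 1 / exp (T * b)) \<longlongrightarrow> 0) at_top"
    using f filterlim_compose by blast
  then have "((\<lambda>b. (1 / T) * ((T * b) ^ 1 / exp (T * b))) \<longlongrightarrow> (1 / T) * 0) at_top"
    by (intro tendsto_mult tendsto_const)
  moreover have "(1 / T) * ((T * b) ^ 1 / exp (T * b)) = b * exp (-T * b)" for b
    using T by (simp add: exp_minus field_simps)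
  ultimately show ?thesis by simp
qed

lemma lim_inv_top: "((\<lambda>b::real. 1 / b) \<longlongrightarrow> 0) at_top"
  using tendsto_inverse_0_at_top[OF filterlim_ident] by (simp add: inverse_eq_divide)

theorem proposition3:
  fixes T r :: real
  assumes "T > 0" and "r > 0"
  shows "(\<forall>a<0. \<exists>k. is_kopt T r a k) \<and>
         (\<forall>kopt :: real \<Rightarrow> real. (\<forall>a<0. is_kopt T r a (kopt a)) \<longrightarrow>
            ((\<lambda>a. (1 / kopt a) * (exp (T * a) / (2 * r * \<bar>a\<bar>))) \<longlongrightarrow> 1) at_bot)"
proof (intro conjI allI impI)
  have T: "T > 0" and r: "r > 0" using assms by auto
  show "\<exists>k. is_kopt T r a k" if "a < 0" for a using kopt_exists[OF T r that] .
  fix kopt :: "real \<Rightarrow> real"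
  assume H: "\<forall>a<0. is_kopt T r a (kopt a)"
  define eps where "eps = (\<lambda>b::real. exp (-T * b) / b)"
  define k0 where "k0 = (\<lambda>b. eps b / (2 * r))"
  define K1 where "K1 = (\<lambda>b. 8 * (1 + 3 / 2 * r * b\<^sup>2) * eps b / r)"
  define eta where "eta = (\<lambda>b. 1 / (2 * b\<^sup>2) + r * K1 b * eps b + r * (K1 b)\<^sup>2 / (2 * b\<^sup>2))"
  define mu where "mu = (\<lambda>b. 17 / b\<^sup>2 + 17 * r * (k0 b)\<^sup>2 / b\<^sup>2)"
  define bnd where "bnd = (\<lambda>b. 2 * (2 * eta b + mu b) / r)"
  define q where "q = (\<lambda>b. kopt (-b) / k0 b)"
  have Le: "(eps \<longlongrightarrow> 0) at_top"
  proof -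
    have "((\<lambda>b. exp (-T * b) * (1 / b)) \<longlongrightarrow> 0 * 0) at_top"
      by (intro tendsto_mult lim_exp_neg[OF T] lim_inv_top)
    then show ?thesis unfolding eps_def by simp
  qed
  have Lk0: "(k0 \<longlongrightarrow> 0) at_top"
    unfolding k0_def using tendsto_divide[OF Le tendsto_const, of "2 * r"] r by simp
  have LK1: "(K1 \<longlongrightarrow> 0) at_top"
  proof -
    have "((\<lambda>b. 8 / r * eps b + 12 * (b * exp (-T * b))) \<longlongrightarrow> 8 / r * 0 + 12 * 0) at_top"
      by (intro tendsto_intros Le lim_b_exp_neg[OF T])
    moreover have "eventually (\<lambda>b. 8 / r * eps b + 12 * (b * exp (-T * b)) = K1 b) at_top"
      using eventually_gt_at_top[of 0]
    proof eventually_elim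
      case (elim b)
      then show ?case unfolding K1_def eps_def using r
        by (simp add: field_simps power2_eq_square)
    qed
    ultimately show ?thesis by (auto intro: Lim_transform_eventually)
  qed
  have Leta: "(eta \<longlongrightarrow> 0) at_top"
  proof -
    have "((\<lambda>b. 1 / 2 * (1 / b)\<^sup>2 + r * K1 b * eps b + r / 2 * (K1 b)\<^sup>2 * (1 / b)\<^sup>2) \<longlongrightarrow>
        1 / 2 * 0\<^sup>2 + r * 0 * 0 + r / 2 * 0\<^sup>2 * 0\<^sup>2) at_top"
      by (intro tendsto_intros Le LK1 lim_inv_top)
    moreover have "1 / 2 * (1 / b)\<^sup>2 + r * K1 b * eps b + r / 2 * (K1 b)\<^sup>2 * (1 / b)\<^sup>2 = eta b" for b
      unfolding eta_def by (simp add: field_simps power2_eq_square)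
    ultimately show ?thesis by simp
  qed
  have Lmu: "(mu \<longlongrightarrow> 0) at_top"
  proof -
    have "((\<lambda>b. 17 * (1 / b)\<^sup>2 + 17 * r * (k0 b)\<^sup>2 * (1 / b)\<^sup>2) \<longlongrightarrow> 17 * 0\<^sup>2 + 17 * r * 0\<^sup>2 * 0\<^sup>2) at_top"
      by (intro tendsto_intros Lk0 lim_inv_top)
    moreover have "17 * (1 / b)\<^sup>2 + 17 * r * (k0 b)\<^sup>2 * (1 / b)\<^sup>2 = mu b" for b
      unfolding mu_def by (simp add: field_simps power2_eq_square)
    ultimately show ?thesis by simp
  qed
  have Lbnd: "(bnd \<longlongrightarrow> 0) at_top"
    unfolding bnd_def using tendsto_intros(1) Leta Lmu
    by (metis (no_types) Lmu Leta tendsto_add tendsto_mult_right_zero tendsto_divide_zero mult_zero_right add_0)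
  have ev: "eventually (\<lambda>b. (q b - 1)\<^sup>2 \<le> bnd b) at_top"
  proof -
    have e1: "eventually (\<lambda>b. eta b < r / 4) at_top" using Leta r by (intro order_tendstoD(2)) auto
    have e2: "eventually (\<lambda>b. k0 b < 1) at_top" using Lk0 by (intro order_tendstoD(2)) auto
    have e3: "eventually (\<lambda>b. b \<ge> max 2 (max (5 * pi / T) (2 / sqrt r))) at_top" by (rule eventually_ge_at_top)
    show ?thesis using e1 e2 e3
    proof eventually_elim
      case (elim b)
      have b2: "b \<ge> 2" and b5: "b \<ge> 5 * pi / T" and br: "b \<ge> 2 / sqrt r" using elim(3) by auto
      have b0: "b > 0" using b2 by simp
      define a where "a = -b"
      have a0: "a < 0" unfolding a_def using b0 by simp
      define k where "k = kopt a"
      have kopt: "is_kopt T r a k" using H a0 unfolding k_def by blast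
      define ku where "ku = k_u T a"
      have ku: "ku > b" "ku \<le> b + pi / T" using ku_props[OF T a0] unfolding ku_def a_def by auto
      have kint: "a < k" "k < ku" using kopt unfolding is_kopt_def ku_def by auto
      have min: "\<And>k'. a < k' \<Longrightarrow> k' < ku \<Longrightarrow> J_cost T r a k \<le> J_cost T r a k'"
        using kopt unfolding is_kopt_def ku_def by auto
      have ep0: "eps b > 0" unfolding eps_def using b0 by simp
      have k00: "k0 b > 0" unfolding k0_def using ep0 r by simp
      have pT: "pi / T \<le> b / 5" using b5 T by (simp add: field_simps)
      have kup: "k \<le> 6 / 5 * b" using kint(2) ku(2) pT by linarith
      have klo: "- k \<le> 6 / 5 * b" using kint(1) b0 unfolding a_def by linarith
      have kabs: "\<bar>k\<bar> \<le> 6 / 5 * b" using kup klo by (simp add: abs_le_iff)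
      have kb: "k\<^sup>2 \<le> 3 / 2 * b\<^sup>2"
      proof -
        have "\<bar>k\<bar>\<^sup>2 \<le> (6 / 5 * b)\<^sup>2" using kabs by (intro power_mono) auto
        then have "k\<^sup>2 \<le> 36 / 25 * b\<^sup>2" by (simp add: power2_eq_square)
        moreover have "b\<^sup>2 \<ge> 0" by simp
        ultimately show ?thesis by linarith
      qed
      have rb: "r * b\<^sup>2 \<ge> 4"
      proof -
        have "2 / sqrt r \<le> b" by (rule br)
        then have "2 \<le> b * sqrt r" using r by (simp add: field_simps)
        then have "2\<^sup>2 \<le> (b * sqrt r)\<^sup>2" by (intro power_mono) auto
        then have "4 \<le> b\<^sup>2 * r" using r by (simp add: power_mult_distrib)
        then show ?thesis by (simp add: mult.commute)
      qed
      have Jk: "J_cost T r a k \<ge> (1 + r * k\<^sup>2) * (pi / b * (1 - k * eps b - k\<^sup>2 / (2 * b\<^sup>2)))"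
      proof -
        have pos: "\<And>w. Pk T (-b) k w > 0" using Pk_pos[OF T a0 kint(1)] kint(2) unfolding ku_def a_def by auto
        have "integral UNIV (\<lambda>w. 1 / Pk T (-b) k w) \<ge> pi / b * (1 - k * (exp (-T*b) / b) - k\<^sup>2 / (2 * b\<^sup>2))"
          by (rule f_lower[OF b0 less_imp_le[OF T] pos])
        then show ?thesis unfolding J_cost_def f_H2_eq a_def eps_def
          using r by (intro mult_left_mono) (auto simp: add_nonneg_nonneg)
      qed
      have J0: "J_cost T r a 0 = pi / b"
        unfolding J_cost_def f_H2_eq a_def using f_zero[OF b0] by simp
      have Jk0: "J_cost T r a (k0 b) \<le> (1 + r * (k0 b)\<^sup>2) * (pi / b * (1 - k0 b * eps b + 17 * (k0 b)\<^sup>2 / b\<^sup>2))"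
      proof -
        have "\<bar>k0 b\<bar> \<le> b / 2" using elim(2) k00 b2 by simp
        then have "integral UNIV (\<lambda>w. 1 / Pk T (-b) (k0 b) w) \<le> pi / b * (1 - k0 b * (exp (-T*b) / b) + 17 * (k0 b)\<^sup>2 / b\<^sup>2)"
          using f_upper[OF b0 less_imp_le[OF T]] by blast
        then show ?thesis unfolding J_cost_def f_H2_eq a_def eps_def
          using r by (intro mult_left_mono) (auto simp: add_nonneg_nonneg)
      qed
      have pb: "pi / b > 0" using b0 by simp
      have L0: "(1 + r * k\<^sup>2) * (1 - k * eps b - k\<^sup>2 / (2 * b\<^sup>2)) \<le> 1"
      proof -
        have "(1 + r * k\<^sup>2) * (pi / b * (1 - k * eps b - k\<^sup>2 / (2 * b\<^sup>2))) \<le> pi / b"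
        proof -
          have "0 < ku" using ku b0 by linarith
          then have "J_cost T r a k \<le> J_cost T r a 0" using min[of 0] a0 by blast
          then show ?thesis using Jk J0 by linarith
        qed
        then have "pi / b * ((1 + r * k\<^sup>2) * (1 - k * eps b - k\<^sup>2 / (2 * b\<^sup>2))) \<le> pi / b * 1"
          by (simp only: mult.left_commute[of "1 + r * k\<^sup>2"] mult_1_right)
        then show ?thesis by (simp only: mult_le_cancel_left_pos[OF pb])
      qed
      have L1: "(1 + r * k\<^sup>2) * (1 - k * eps b - k\<^sup>2 / (2 * b\<^sup>2))
             \<le> (1 + r * (k0 b)\<^sup>2) * (1 - k0 b * eps b + 17 * (k0 b)\<^sup>2 / b\<^sup>2)"
      proof -
        have "k0 b < ku" using elim(2) ku b2 by simp
        then have "J_cost T r a k \<le> J_cost T r a (k0 b)" using min[of "k0 b"] k00 a0 by simp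
        then have "(1 + r * k\<^sup>2) * (pi / b * (1 - k * eps b - k\<^sup>2 / (2 * b\<^sup>2)))
            \<le> (1 + r * (k0 b)\<^sup>2) * (pi / b * (1 - k0 b * eps b + 17 * (k0 b)\<^sup>2 / b\<^sup>2))"
          using Jk Jk0 by linarith
        then have "pi / b * ((1 + r * k\<^sup>2) * (1 - k * eps b - k\<^sup>2 / (2 * b\<^sup>2)))
            \<le> pi / b * ((1 + r * (k0 b)\<^sup>2) * (1 - k0 b * eps b + 17 * (k0 b)\<^sup>2 / b\<^sup>2))"
          by (simp only: mult.left_commute[of "1 + r * k\<^sup>2"] mult.left_commute[of "1 + r * (k0 b)\<^sup>2"])
        then show ?thesis by (simp only: mult_le_cancel_left_pos[OF pb])
      qed
      have kK1: "\<bar>k\<bar> \<le> K1 b" unfolding K1_def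
        by (rule asym_stage1[OF r b0 ep0 kb rb L0])
      have "(k / k0 b - 1)\<^sup>2 \<le> 2 * (2 * (1 / (2 * b\<^sup>2) + r * K1 b * eps b + r * (K1 b)\<^sup>2 / (2 * b\<^sup>2))
                               + (17 / b\<^sup>2 + 17 * r * (k0 b)\<^sup>2 / b\<^sup>2)) / r"
        by (rule asym_core[OF r b0 ep0 _ kK1 L1]) (use elim(1) in \<open>auto simp: k0_def eta_def\<close>)
      then show ?case unfolding q_def bnd_def eta_def mu_def k_def a_def .
    qed
  qed
  have "((\<lambda>b. (q b - 1)\<^sup>2) \<longlongrightarrow> 0) at_top"
    by (rule tendsto_sandwich[of "\<lambda>_. 0" _ _ bnd]) (use ev Lbnd in auto)
  then have "((\<lambda>b. sqrt ((q b - 1)\<^sup>2)) \<longlongrightarrow> sqrt 0) at_top" by (rule tendsto_real_sqrt)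
  then have "((\<lambda>b. \<bar>q b - 1\<bar>) \<longlongrightarrow> 0) at_top" by simp
  then have "((\<lambda>b. q b - 1) \<longlongrightarrow> 0) at_top" by (simp add: tendsto_rabs_zero_iff)
  then have "((\<lambda>b. (q b - 1) + 1) \<longlongrightarrow> 0 + 1) at_top" by (intro tendsto_add tendsto_const)
  then have "(q \<longlongrightarrow> 1) at_top" by simp
  then have Lq: "((\<lambda>b. 1 / q b) \<longlongrightarrow> 1 / 1) at_top" by (intro tendsto_divide tendsto_const) auto
  have "eventually (\<lambda>b. 1 / q b = (1 / kopt (- b)) * (exp (T * (- b)) / (2 * r * \<bar>- b\<bar>))) at_top"
    using eventually_gt_at_top[of 0]
  proof eventually_elim
    case (elim b)
    then show ?case unfolding q_def k0_def eps_def using r by (simp add: field_simps)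
  qed
  then have "((\<lambda>b. (1 / kopt (- b)) * (exp (T * (- b)) / (2 * r * \<bar>- b\<bar>))) \<longlongrightarrow> 1) at_top"
    using Lq by (auto intro: Lim_transform_eventually)
  then show "((\<lambda>a. (1 / kopt a) * (exp (T * a) / (2 * r * \<bar>a\<bar>))) \<longlongrightarrow> 1) at_bot"
    by (simp add: filterlim_at_bot_mirror)
qed

end
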